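(* Let $\Lambda_n^{MP}$ denote the Lebesgue constant of polynomial interpolation in $\mathbb{P}^2_n$ at the Morrow-Patterson points $MP_n$ on $Q=[-1,1]^2$. Then $\Lambda_n^{MP}=\mathcal O(n^2)$, i.e. there is a constant $C>0$ such that $\Lambda_n^{MP}\le Cn^2$ for all positive even integers $n$.
   Context: $\mathbb{P}^2_n$ is the space of real bivariate polynomials of total degree at most $n$. For a positive even integer $n$, the Morrow-Patterson points are $MP_n=\{(x_m,y_{m,k}) : m=1,\dots,n+1,\ k=1,\dots,\tfrac n2+1\}$ with $x_m=\cos\frac{m\pi}{n+2}$ and $y_{m,k}=\cos\frac{2k\pi}{n+3}$ if $m$ is odd, $y_{m,k}=\cos\frac{(2k-1)\pi}{n+3}$ if $m$ is even; this set has $\binom{n+2}{2}$ points and is unisolvent for $\mathbb{P}^2_n$. The Lebesgue constant is $\Lambda_n^{MP}=\max_{(x,y)\in Q}\sum_{a\in MP_n}|\ell_a(x,y)|$, where $\ell_a\in\mathbb{P}^2_n$ are the Lagrange basis polynomials ($\ell_a(b)=\delta_{ab}$ for $a,b\in MP_n$); equivalently it is the operator norm (in the sup-norm on $Q$) of the interpolation operator $\mathcal C(Q)\to\mathbb{P}^2_n$ at $MP_n$. *)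

theory Defs
  imports "HOL-Analysis.Analysis"
begin

definition poly2 :: "nat \<Rightarrow> (real \<times> real \<Rightarrow> real) set" where
  "poly2 n = {f. \<exists>c :: nat \<Rightarrow> nat \<Rightarrow> real.
      \<forall>x y. f (x, y) = (\<Sum>i\<le>n. \<Sum>j\<le>n - i. c i j * x ^ i * y ^ j)}"

definition MP_y :: "nat \<Rightarrow> nat \<Rightarrow> nat \<Rightarrow> real" where
  "MP_y n m k = (if odd m then cos (2 * real k * pi / (real n + 3))
                 else cos ((2 * real k - 1) * pi / (real n + 3)))"

definition MP_points :: "nat \<Rightarrow> (real \<times> real) set" where
  "MP_points n = {(cos (real m * pi / (real n + 2)), MP_y n m k) | m k.
      m \<in> {1..n+1} \<and> k \<in> {1..n div 2 + 1}}"

definition lagrange2 :: "nat \<Rightarrow> (real \<times> real) set \<Rightarrow> real \<times> real \<Rightarrow> (real \<times> real \<Rightarrow> real)" where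
  "lagrange2 n A a = (THE f. f \<in> poly2 n \<and> (\<forall>b\<in>A. f b = (if b = a then 1 else 0)))"

definition lebesgue_const :: "nat \<Rightarrow> (real \<times> real) set \<Rightarrow> real" where
  "lebesgue_const n A = (SUP p \<in> {-1..1} \<times> {-1..1}. \<Sum>a\<in>A. \<bar>lagrange2 n A a p\<bar>)"

definition lebesgue_MP :: "nat \<Rightarrow> real" where
  "lebesgue_MP n = lebesgue_const n (MP_points n)"

end

theory Submission
  imports Defs "HOL-Computational_Algebra.Polynomial"
begin


definition H2 :: "complex \<Rightarrow> complex \<Rightarrow> nat \<Rightarrow> complex" where
  "H2 u v p = (\<Sum>i\<le>p. u ^ i * v ^ (p - i))"

lemma H2_0 [simp]: "H2 u v 0 = 1" by (simp add: H2_def)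

lemma H2_Suc1: "H2 u v (Suc p) = u * H2 u v p + v ^ Suc p"
proof -
  have "H2 u v (Suc p) = v ^ Suc p + (\<Sum>i\<le>p. u ^ Suc i * v ^ (Suc p - Suc i))"
    unfolding H2_def by (subst sum.atMost_Suc_shift) simp
  also have "(\<Sum>i\<le>p. u ^ Suc i * v ^ (Suc p - Suc i)) = u * H2 u v p"
    by (simp add: H2_def sum_distrib_left mult.assoc)
  finally show ?thesis by simp
qed

lemma H2_sym: "H2 u v p = H2 v u p"
  unfolding H2_def
  by (rule sum.reindex_bij_witness[where i="\<lambda>i. p - i" and j="\<lambda>i. p - i"]) (auto simp: mult.commute)

lemma H2_Suc2: "H2 u v (Suc p) = v * H2 u v p + u ^ Suc p"
  using H2_Suc1[of v u p] by (simp add: H2_sym)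

lemma H2_diff: "(u - v) * H2 u v p = u ^ Suc p - v ^ Suc p"
proof (induction p)
  case 0 then show ?case by simp
next
  case (Suc p)
  have "(u - v) * H2 u v (Suc p) = u * ((u - v) * H2 u v p) + (u - v) * v ^ Suc p"
    by (simp only: H2_Suc1) (simp add: algebra_simps)
  also have "\<dots> = u * (u ^ Suc p - v ^ Suc p) + (u - v) * v ^ Suc p" by (simp only: Suc)
  also have "\<dots> = u ^ Suc (Suc p) - v ^ Suc (Suc p)" by (simp add: algebra_simps)
  finally show ?case .
qed

lemma H2_rec2: "H2 u v (Suc (Suc p)) = u ^ Suc (Suc p) + v ^ Suc (Suc p) + u * v * H2 u v p"
proof (induction p)
  case 0 then show ?case by (simp add: H2_def numeral_2_eq_2 algebra_simps)
next
  case (Suc p)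
  have "H2 u v (Suc (Suc (Suc p))) = u * H2 u v (Suc (Suc p)) + v ^ Suc (Suc (Suc p))"
    by (rule H2_Suc1)
  also have "\<dots> = u * (u ^ Suc (Suc p) + v ^ Suc (Suc p) + u * v * H2 u v p) + v ^ Suc (Suc (Suc p))"
    by (simp only: Suc)
  also have "\<dots> = u ^ Suc (Suc (Suc p)) + v ^ Suc (Suc (Suc p)) + u * v * (u * H2 u v p + v ^ Suc p)"
    by (simp add: algebra_simps)
  also have "u * H2 u v p + v ^ Suc p = H2 u v (Suc p)" by (simp only: H2_Suc1)
  finally show ?case .
qed

lemma H2_scale: "H2 (z * u) (z * v) p = z ^ p * H2 u v p"
  unfolding H2_def by (auto simp: sum_distrib_left power_mult_distrib power_add[symmetric] intro!: sum.cong)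

lemma H2_norm: "norm u = 1 \<Longrightarrow> norm v = 1 \<Longrightarrow> norm (H2 u v p) \<le> real p + 1"
proof -
  assume u: "norm u = 1" and v: "norm v = 1"
  have "norm (H2 u v p) \<le> (\<Sum>i\<le>p. norm (u ^ i * v ^ (p - i)))"
    unfolding H2_def by (rule norm_sum)
  also have "\<dots> = (\<Sum>i\<le>p. 1)" by (simp add: norm_mult norm_power u v)
  finally show ?thesis by simp
qed

lemma H2_norm2: "norm u = 1 \<Longrightarrow> norm v = 1 \<Longrightarrow> u \<noteq> v \<Longrightarrow> norm (H2 u v p) \<le> 2 / norm (u - v)"
proof -
  assume u: "norm u = 1" and v: "norm v = 1" and uv: "u \<noteq> v"
  have "norm (u - v) * norm (H2 u v p) = norm (u ^ Suc p - v ^ Suc p)"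
    using H2_diff[of u v p] by (metis norm_mult)
  also have "\<dots> \<le> norm (u ^ Suc p) + norm (v ^ Suc p)" by (rule norm_triangle_ineq4)
  also have "\<dots> = 2" by (simp only: norm_power u v) simp
  finally have "norm (u - v) * norm (H2 u v p) \<le> 2" .
  moreover have "norm (u - v) > 0" using uv by simp
  ultimately show ?thesis by (simp add: field_simps)
qed

fun H3 :: "complex \<Rightarrow> complex \<Rightarrow> complex \<Rightarrow> nat \<Rightarrow> complex" where
  "H3 u v w 0 = 1"
| "H3 u v w (Suc p) = w * H3 u v w p + H2 u v (Suc p)"

fun H4 :: "complex \<Rightarrow> complex \<Rightarrow> complex \<Rightarrow> complex \<Rightarrow> nat \<Rightarrow> complex" where
  "H4 u v w s 0 = 1"
| "H4 u v w s (Suc p) = s * H4 u v w s p + H3 u v w (Suc p)"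

lemma H2_1: "H2 u v (Suc 0) = u + v" by (simp add: H2_def)

lemma H3_diff: "(u - w) * H3 u v w p = H2 u v (Suc p) - H2 v w (Suc p)"
proof (induction p)
  case 0 then show ?case by (simp add: H2_1)
next
  case (Suc p)
  have "(u - w) * H3 u v w (Suc p) = w * ((u - w) * H3 u v w p) + (u - w) * H2 u v (Suc p)"
    by (simp add: algebra_simps)
  also have "\<dots> = w * (H2 u v (Suc p) - H2 v w (Suc p)) + (u - w) * H2 u v (Suc p)"
    by (simp only: Suc)
  also have "\<dots> = u * H2 u v (Suc p) - w * H2 v w (Suc p)"
    by (simp add: algebra_simps)
  also have "\<dots> = H2 u v (Suc (Suc p)) - H2 v w (Suc (Suc p))"
    by (simp add: H2_Suc1[of u v "Suc p"] H2_Suc2[of v w "Suc p"])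
  finally show ?case .
qed

lemma H4_diff: "(u - s) * H4 u v w s p = H3 u v w (Suc p) - H3 v w s (Suc p)"
proof (induction p)
  case 0 then show ?case by (simp add: H2_1)
next
  case (Suc p)
  have "(u - s) * H4 u v w s (Suc p) = s * ((u - s) * H4 u v w s p) + (u - s) * H3 u v w (Suc p)"
    by (simp add: algebra_simps)
  also have "\<dots> = s * (H3 u v w (Suc p) - H3 v w s (Suc p)) + (u - s) * H3 u v w (Suc p)"
    by (simp only: Suc)
  also have "\<dots> = u * H3 u v w (Suc p) - s * H3 v w s (Suc p)"
    by (simp add: algebra_simps)
  also have "\<dots> = w * H3 u v w (Suc p) + (u - w) * H3 u v w (Suc p) - s * H3 v w s (Suc p)"
    by (simp add: algebra_simps)
  also have "\<dots> = w * H3 u v w (Suc p) + (H2 u v (Suc (Suc p)) - H2 v w (Suc (Suc p))) - s * H3 v w s (Suc p)"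
    by (simp only: H3_diff)
  also have "\<dots> = H3 u v w (Suc (Suc p)) - H3 v w s (Suc (Suc p))"
    by (simp only: H3.simps) (simp add: algebra_simps)
  finally show ?case .
qed

lemma H3_sum: "H3 u v w p = (\<Sum>q\<le>p. H2 u v (p - q) * w ^ q)"
proof (induction p)
  case 0 then show ?case by simp
next
  case (Suc p)
  have "(\<Sum>q\<le>Suc p. H2 u v (Suc p - q) * w ^ q) = H2 u v (Suc p) + (\<Sum>q\<le>p. H2 u v (p - q) * w ^ Suc q)"
    by (subst sum.atMost_Suc_shift) simp
  also have "\<dots> = H2 u v (Suc p) + w * H3 u v w p"
    by (simp add: Suc sum_distrib_left algebra_simps)
  finally show ?case by simp
qed

lemma H4_sum: "H4 u v w s p = (\<Sum>q\<le>p. H2 u v (p - q) * H2 w s q)"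
proof (induction p)
  case 0 then show ?case by simp
next
  case (Suc p)
  have "(\<Sum>q\<le>Suc p. H2 u v (Suc p - q) * H2 w s q)
      = H2 u v (Suc p) + (\<Sum>q\<le>p. H2 u v (p - q) * (s * H2 w s q + w ^ Suc q))"
    by (subst sum.atMost_Suc_shift) (simp add: H2_Suc2)
  also have "\<dots> = H2 u v (Suc p) + s * (\<Sum>q\<le>p. H2 u v (p - q) * H2 w s q) + (\<Sum>q\<le>p. H2 u v (p - q) * w ^ Suc q)"
    by (simp add: sum.distrib sum_distrib_left algebra_simps)
  also have "(\<Sum>q\<le>p. H2 u v (p - q) * w ^ Suc q) = w * H3 u v w p"
    by (simp add: H3_sum sum_distrib_left algebra_simps)
  finally have calc: "(\<Sum>q\<le>Suc p. H2 u v (Suc p - q) * H2 w s q) = H2 u v (Suc p) + s * (\<Sum>q\<le>p. H2 u v (p - q) * H2 w s q) + w * H3 u v w p" .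
  have "H4 u v w s (Suc p) = s * (\<Sum>q\<le>p. H2 u v (p - q) * H2 w s q) + (w * H3 u v w p + H2 u v (Suc p))"
    by (simp only: H4.simps H3.simps Suc)
  with calc show ?case by (metis (no_types, lifting) add.assoc add.commute)
qed

lemma H4_norm_triv:
  assumes "norm u = 1" "norm v = 1" "norm w = 1" "norm s = 1"
  shows "norm (H4 u v w s p) \<le> (real p + 1) ^ 3"
proof -
  have "norm (H4 u v w s p) \<le> (\<Sum>q\<le>p. norm (H2 u v (p - q) * H2 w s q))"
    unfolding H4_sum by (rule norm_sum)
  also have "\<dots> \<le> (\<Sum>q\<le>p. (real p + 1) * (real p + 1))"
  proof (rule sum_mono)
    fix q assume q: "q \<in> {..p}"
    have "norm (H2 u v (p - q)) \<le> real p + 1"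
      using H2_norm[OF assms(1,2), of "p - q"] q by auto
    moreover have "norm (H2 w s q) \<le> real p + 1"
      using H2_norm[OF assms(3,4), of q] q by auto
    ultimately show "norm (H2 u v (p - q) * H2 w s q) \<le> (real p + 1) * (real p + 1)"
      unfolding norm_mult by (intro mult_mono) auto
  qed
  also have "\<dots> = (real p + 1) ^ 3" by (simp add: power3_eq_cube)
  finally show ?thesis .
qed

lemma H2_rec: "H2 u v (Suc (Suc p)) = (u + v) * H2 u v (Suc p) - u * v * H2 u v p"
proof -
  have "v * H2 u v (Suc p) = u * v * H2 u v p + v ^ Suc (Suc p)"
    by (simp only: H2_Suc1) (simp add: algebra_simps)
  then show ?thesis by (simp only: H2_Suc1[of u v "Suc p"]) (simp add: algebra_simps)
qed

lemma H3_norm_bound: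
  assumes "norm u = 1" "norm v = 1" "norm w = 1" "D > 0" "D \<le> norm (u - w)" "D \<le> norm (v - w)"
  shows "norm (H3 u v w p) \<le> (real p + 2 + 2 / D) / D"
proof -
  have uw: "u \<noteq> w" and vw: "v \<noteq> w" using assms by auto
  have "norm (u - w) * norm (H3 u v w p) = norm (H2 u v (Suc p) - H2 v w (Suc p))"
    using H3_diff[of u w v p] by (metis norm_mult)
  also have "\<dots> \<le> norm (H2 u v (Suc p)) + norm (H2 v w (Suc p))" by (rule norm_triangle_ineq4)
  also have "\<dots> \<le> (real p + 2) + 2 / D"
  proof (rule add_mono)
    show "norm (H2 u v (Suc p)) \<le> real p + 2" using H2_norm[OF assms(1,2), of "Suc p"] by simp
    have "norm (H2 v w (Suc p)) \<le> 2 / norm (v - w)" by (rule H2_norm2[OF assms(2,3) vw])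
    also have "\<dots> \<le> 2 / D" using assms(4,6) by (intro divide_left_mono mult_pos_pos) auto
    finally show "norm (H2 v w (Suc p)) \<le> 2 / D" .
  qed
  finally have *: "norm (u - w) * norm (H3 u v w p) \<le> real p + 2 + 2 / D" .
  have "D * norm (H3 u v w p) \<le> norm (u - w) * norm (H3 u v w p)"
    using assms(5) by (intro mult_right_mono) auto
  with * have "D * norm (H3 u v w p) \<le> real p + 2 + 2 / D" by linarith
  with assms(4) show ?thesis by (simp add: field_simps)
qed

lemma H4_norm_bound:
  assumes "norm u = 1" "norm v = 1" "norm w = 1" "norm s = 1" "D > 0"
    "D \<le> norm (u - w)" "D \<le> norm (v - w)" "D \<le> norm (u - s)" "D \<le> norm (v - s)"
  shows "norm (H4 u v w s p) \<le> 2 * (real p + 3 + 2 / D) / D ^ 2"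
proof -
  have a: "norm (H3 u v w (Suc p)) \<le> (real p + 3 + 2 / D) / D"
    using H3_norm_bound[OF assms(1,2,3,5,6,7), of "Suc p"] by (simp del: H3.simps add: add_ac)
  have vs: "D \<le> norm (w - s)" if False using that by simp
  have b: "norm (H3 v w s (Suc p)) \<le> (real p + 3 + 2 / D) / D"
  proof -
    have ws: "norm (H2 v w (Suc (Suc p))) \<le> 2 / D"
    proof -
      have "v \<noteq> w" using assms(5,7) by auto
      then have "norm (H2 v w (Suc (Suc p))) \<le> 2 / norm (v - w)" by (rule H2_norm2[OF assms(2,3)])
      also have "\<dots> \<le> 2 / D" using assms(5,7) by (intro divide_left_mono mult_pos_pos) auto
      finally show ?thesis .
    qed
    have "norm (v - s) * norm (H3 v w s (Suc p)) = norm (H2 v w (Suc (Suc p)) - H2 w s (Suc (Suc p)))"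
      using H3_diff[of v s w "Suc p"] by (metis norm_mult)
    also have "\<dots> \<le> norm (H2 v w (Suc (Suc p))) + norm (H2 w s (Suc (Suc p)))" by (rule norm_triangle_ineq4)
    also have "\<dots> \<le> 2 / D + (real p + 3)"
      using ws H2_norm[OF assms(3,4), of "Suc (Suc p)"] by simp
    finally have *: "norm (v - s) * norm (H3 v w s (Suc p)) \<le> 2 / D + (real p + 3)" .
    have "D * norm (H3 v w s (Suc p)) \<le> norm (v - s) * norm (H3 v w s (Suc p))"
      using assms(9) by (intro mult_right_mono) auto
    with * have "D * norm (H3 v w s (Suc p)) \<le> real p + 3 + 2 / D" by linarith
    with assms(5) show ?thesis by (simp add: field_simps)
  qed
  have "norm (u - s) * norm (H4 u v w s p) = norm (H3 u v w (Suc p) - H3 v w s (Suc p))"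
    using H4_diff[of u s v w p] by (metis norm_mult)
  also have "\<dots> \<le> norm (H3 u v w (Suc p)) + norm (H3 v w s (Suc p))" by (rule norm_triangle_ineq4)
  also have "\<dots> \<le> 2 * ((real p + 3 + 2 / D) / D)" using add_mono[OF a b] by (simp del: H3.simps)
  finally have *: "norm (u - s) * norm (H4 u v w s p) \<le> 2 * ((real p + 3 + 2 / D) / D)" .
  have "D * norm (H4 u v w s p) \<le> norm (u - s) * norm (H4 u v w s p)"
    using assms(8) by (intro mult_right_mono) auto
  with * have "D * norm (H4 u v w s p) \<le> 2 * ((real p + 3 + 2 / D) / D)" by linarith
  with assms(5) show ?thesis by (simp add: field_simps power2_eq_square)
qed

lemma H4_norm_final:
  assumes "norm u = 1" "norm v = 1" "norm w = 1" "norm s = 1" "n \<ge> 1" "p \<le> n"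
    "D \<ge> 0" "D \<le> norm (u - w)" "D \<le> norm (v - w)" "D \<le> norm (u - s)" "D \<le> norm (v - s)"
  shows "norm (H4 u v w s p) \<le> 16 * real n ^ 3 / (1 + real n ^ 2 * D ^ 2 / 4)"
proof (cases "real n * D \<le> 2")
  case True
  have "norm (H4 u v w s p) \<le> (real p + 1) ^ 3" by (rule H4_norm_triv[OF assms(1-4)])
  also have "\<dots> \<le> (2 * real n) ^ 3" using assms(5,6) by (intro power_mono) auto
  also have "\<dots> = 8 * real n ^ 3" by simp
  finally have a: "norm (H4 u v w s p) \<le> 8 * real n ^ 3" .
  have "(real n * D) ^ 2 \<le> 2 ^ 2" using True assms(7) by (intro power_mono) auto
  then have b: "1 + real n ^ 2 * D ^ 2 / 4 \<le> 2" by (simp add: power_mult_distrib)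
  have "16 * real n ^ 3 / 2 \<le> 16 * real n ^ 3 / (1 + real n ^ 2 * D ^ 2 / 4)"
    by (rule divide_left_mono[OF b]) (auto intro!: add_pos_nonneg)
  then have "8 * real n ^ 3 \<le> 16 * real n ^ 3 / (1 + real n ^ 2 * D ^ 2 / 4)" by simp
  with a show ?thesis by linarith
next
  case False
  have n0: "real n > 0" using assms(5) by simp
  have Dpos: "D > 0" using False assms(7) n0 by (metis mult_zero_right not_le order_le_less zero_le_numeral)
  have "2 / D < real n" using False Dpos by (simp add: field_simps)
  have "norm (H4 u v w s p) \<le> 2 * (real p + 3 + 2 / D) / D ^ 2"
    by (rule H4_norm_bound[OF assms(1-4) Dpos assms(8-11)])
  also have "\<dots> \<le> 2 * (real n + 3 + real n) / D ^ 2"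
    using \<open>2 / D < real n\<close> assms(6) Dpos by (intro divide_right_mono mult_left_mono add_mono) auto
  also have "\<dots> \<le> 10 * real n / D ^ 2"
    using assms(5) Dpos by (intro divide_right_mono) auto
  also have "\<dots> \<le> 16 * real n ^ 3 / (1 + real n ^ 2 * D ^ 2 / 4)"
  proof -
    have "1 \<le> real n ^ 2 * D ^ 2 / 4"
    proof -
      have "2 ^ 2 \<le> (real n * D) ^ 2" using False by (intro power_mono) auto
      then show ?thesis by (simp add: power_mult_distrib)
    qed
    then have "1 + real n ^ 2 * D ^ 2 / 4 \<le> real n ^ 2 * D ^ 2 / 2" by linarith
    then have "16 * real n ^ 3 / (real n ^ 2 * D ^ 2 / 2) \<le> 16 * real n ^ 3 / (1 + real n ^ 2 * D ^ 2 / 4)"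
      by (intro divide_left_mono mult_pos_pos add_pos_nonneg) (use assms(5) in \<open>auto simp: n0 Dpos intro!: mult_pos_pos\<close>)
    moreover have "16 * real n ^ 3 / (real n ^ 2 * D ^ 2 / 2) = 32 * real n / D ^ 2"
      using n0 Dpos by (simp add: field_simps power2_eq_square power3_eq_cube)
    moreover have "10 * real n / D ^ 2 \<le> 32 * real n / D ^ 2"
      using n0 Dpos by (intro divide_right_mono) auto
    ultimately show ?thesis by linarith
  qed
  finally show ?thesis .
qed


fun U :: "nat \<Rightarrow> real \<Rightarrow> real" where
  "U 0 x = 1"
| "U (Suc 0) x = 2 * x"
| "U (Suc (Suc i)) x = 2 * x * U (Suc i) x - U i x"

lemma cis_plus_neg: "cis t + cis (- t) = complex_of_real (2 * cos t)"
  by (simp add: complex_eq_iff)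

lemma cis_minus_neg: "cis t - cis (- t) = Complex 0 (2 * sin t)"
  by (simp add: complex_eq_iff)

lemma cis_mult_neg: "cis t * cis (- t) = 1"
  by (simp add: cis_mult)

lemma U_cis: "complex_of_real (U i (cos t)) = H2 (cis t) (cis (- t)) i"
proof (induction i rule: less_induct)
  case (less i)
  show ?case
  proof (cases i)
    case 0 then show ?thesis by simp
  next
    case (Suc j)
    show ?thesis
    proof (cases j)
      case 0 with Suc show ?thesis by (simp add: H2_1 cis_plus_neg)
    next
      case (Suc k)
      have ih1: "complex_of_real (U (Suc k) (cos t)) = H2 (cis t) (cis (- t)) (Suc k)"
        using less.IH \<open>i = Suc j\<close> Suc by simp
      have ih0: "complex_of_real (U k (cos t)) = H2 (cis t) (cis (- t)) k"
        using less.IH \<open>i = Suc j\<close> Suc by simp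
      have "H2 (cis t) (cis (- t)) (Suc (Suc k)) = (cis t + cis (- t)) * H2 (cis t) (cis (- t)) (Suc k) - cis t * cis (- t) * H2 (cis t) (cis (- t)) k"
        by (rule H2_rec)
      also have "\<dots> = complex_of_real (2 * cos t) * complex_of_real (U (Suc k) (cos t)) - complex_of_real (U k (cos t))"
        by (simp only: cis_plus_neg cis_mult_neg ih1 ih0) simp
      finally show ?thesis using \<open>i = Suc j\<close> Suc by simp
    qed
  qed
qed

lemma U_abs: "\<bar>U i (cos t)\<bar> \<le> real i + 1"
proof -
  have "\<bar>U i (cos t)\<bar> = norm (complex_of_real (U i (cos t)))" by simp
  also have "\<dots> = norm (H2 (cis t) (cis (- t)) i)" by (simp only: U_cis)
  also have "\<dots> \<le> real i + 1" by (rule H2_norm) auto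
  finally show ?thesis .
qed

lemma U_abs': "\<bar>x\<bar> \<le> 1 \<Longrightarrow> \<bar>U i x\<bar> \<le> real i + 1"
  using U_abs[of i "arccos x"] by (simp add: cos_arccos_abs)

lemma U_sin: "sin t * U i (cos t) = sin ((real i + 1) * t)"
proof -
  have "(cis t - cis (- t)) * H2 (cis t) (cis (- t)) i = cis t ^ Suc i - cis (- t) ^ Suc i"
    by (rule H2_diff)
  moreover have p1: "cis t ^ Suc i = cis ((real i + 1) * t)" unfolding Complex.DeMoivre by (simp add: algebra_simps)
  moreover have p2: "cis (- t) ^ Suc i = cis (- ((real i + 1) * t))" unfolding Complex.DeMoivre by (simp add: algebra_simps)
  ultimately have "Complex 0 (2 * sin t) * complex_of_real (U i (cos t)) = cis ((real i + 1) * t) - cis (- ((real i + 1) * t))"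
    by (simp only: cis_minus_neg U_cis[symmetric])
  then have "Im (Complex 0 (2 * sin t) * complex_of_real (U i (cos t))) = Im (cis ((real i + 1) * t) - cis (- ((real i + 1) * t)))"
    by simp
  then show ?thesis by simp
qed

lemma U_diff2: "U (Suc (Suc i)) (cos t) - U i (cos t) = 2 * cos ((real i + 2) * t)"
proof -
  have "H2 (cis t) (cis (- t)) (Suc (Suc i)) = cis t ^ Suc (Suc i) + cis (- t) ^ Suc (Suc i) + cis t * cis (- t) * H2 (cis t) (cis (- t)) i"
    by (rule H2_rec2)
  moreover have p1: "cis t ^ Suc (Suc i) = cis ((real i + 2) * t)" unfolding Complex.DeMoivre by (simp add: algebra_simps)
  moreover have p2: "cis (- t) ^ Suc (Suc i) = cis (- ((real i + 2) * t))" unfolding Complex.DeMoivre by (simp add: algebra_simps)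
  ultimately have "complex_of_real (U (Suc (Suc i)) (cos t)) = cis ((real i + 2) * t) + cis (- ((real i + 2) * t)) + complex_of_real (U i (cos t))"
    by (simp only: U_cis[symmetric] cis_mult_neg mult_1)
  then have "Re (complex_of_real (U (Suc (Suc i)) (cos t))) = Re (cis ((real i + 2) * t) + cis (- ((real i + 2) * t)) + complex_of_real (U i (cos t)))"
    by simp
  then show ?thesis by simp
qed

lemma norm_cis_diff: "norm (cis a - cis b) = 2 * \<bar>sin ((a - b) / 2)\<bar>"
proof -
  have e1: "(a + b) / 2 + (a - b) / 2 = a" by (simp add: field_simps)
  have e2: "(a + b) / 2 + - ((a - b) / 2) = b" by (simp add: field_simps)
  have "cis a - cis b = cis ((a + b) / 2) * (cis ((a - b) / 2) - cis (- ((a - b) / 2)))"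
    by (simp only: right_diff_distrib cis_mult e1 e2)
  also have "\<dots> = cis ((a + b) / 2) * Complex 0 (2 * sin ((a - b) / 2))"
    by (simp only: cis_minus_neg)
  finally have "norm (cis a - cis b) = norm (Complex 0 (2 * sin ((a - b) / 2)))"
    by (simp add: norm_mult)
  also have "\<dots> = sqrt ((2 * sin ((a - b) / 2))^2)" by (simp add: cmod_def power_mult_distrib)
  also have "\<dots> = 2 * \<bar>sin ((a - b) / 2)\<bar>" by (simp only: real_sqrt_abs)
  finally show ?thesis .
qed

definition Fk :: "nat \<Rightarrow> real \<Rightarrow> real" where
  "Fk n w = 1 / (1 + real n ^ 2 * sin (w / 2) ^ 2)"

lemma Fk_pos: "Fk n w > 0"
  unfolding Fk_def by (intro divide_pos_pos add_pos_nonneg) auto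

definition Phi :: "real \<Rightarrow> real \<Rightarrow> real \<Rightarrow> nat \<Rightarrow> complex" where
  "Phi th ph psi r = (\<Sum>i\<le>r. complex_of_real (U i (cos th) * U (r - i) (cos ph)) * cis (real i * psi))"

lemma Phi_H4: "Phi th ph psi r = H4 (cis ph) (cis (- ph)) (cis (psi + th)) (cis (psi - th)) r"
proof -
  have "H2 (cis (psi + th)) (cis (psi - th)) i = cis (real i * psi) * complex_of_real (U i (cos th))" for i
  proof -
    have "H2 (cis (psi + th)) (cis (psi - th)) i = H2 (cis psi * cis th) (cis psi * cis (- th)) i"
      by (simp add: cis_mult)
    also have "\<dots> = cis psi ^ i * H2 (cis th) (cis (- th)) i" by (rule H2_scale)
    also have "\<dots> = cis (real i * psi) * complex_of_real (U i (cos th))"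
      using Complex.DeMoivre[of psi i] U_cis[of i th] by simp
    finally show ?thesis .
  qed
  then show ?thesis
    unfolding Phi_def H4_sum by (auto simp: U_cis intro!: sum.cong)
qed

lemma min4_F:
  fixes a b c d :: real
  shows "1 / (1 + real n ^ 2 * (min (min (2 * \<bar>sin (a/2)\<bar>) (2 * \<bar>sin (b/2)\<bar>)) (min (2 * \<bar>sin (c/2)\<bar>) (2 * \<bar>sin (d/2)\<bar>))) ^ 2 / 4)
      \<le> Fk n a + Fk n b + Fk n c + Fk n d"
proof -
  define m where "m = min (min (2 * \<bar>sin (a/2)\<bar>) (2 * \<bar>sin (b/2)\<bar>)) (min (2 * \<bar>sin (c/2)\<bar>) (2 * \<bar>sin (d/2)\<bar>))"
  have e: "1 / (1 + real n ^ 2 * (2 * \<bar>sin (x/2)\<bar>) ^ 2 / 4) = Fk n x" for x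
    by (simp add: Fk_def power_mult_distrib)
  have p: "Fk n x > 0" for x by (rule Fk_pos)
  have "m = 2 * \<bar>sin (a/2)\<bar> \<or> m = 2 * \<bar>sin (b/2)\<bar> \<or> m = 2 * \<bar>sin (c/2)\<bar> \<or> m = 2 * \<bar>sin (d/2)\<bar>"
    unfolding m_def by linarith
  then have "1 / (1 + real n ^ 2 * m ^ 2 / 4) = Fk n a \<or> 1 / (1 + real n ^ 2 * m ^ 2 / 4) = Fk n b \<or>
     1 / (1 + real n ^ 2 * m ^ 2 / 4) = Fk n c \<or> 1 / (1 + real n ^ 2 * m ^ 2 / 4) = Fk n d"
    using e by metis
  then show ?thesis
    unfolding m_def[symmetric] using p[of a] p[of b] p[of c] p[of d] by linarith
qed

lemma Phi_bound:
  assumes "n \<ge> 1" "r \<le> n"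
  shows "norm (Phi th ph psi r) \<le> 16 * real n ^ 3 *
     (Fk n (psi + th - ph) + Fk n (psi + th + ph) + Fk n (psi - th - ph) + Fk n (psi - th + ph))"
proof -
  define D where "D = min (min (2 * \<bar>sin ((psi + th - ph) / 2)\<bar>) (2 * \<bar>sin ((psi + th + ph) / 2)\<bar>))
                         (min (2 * \<bar>sin ((psi - th - ph) / 2)\<bar>) (2 * \<bar>sin ((psi - th + ph) / 2)\<bar>))"
  have s1: "\<bar>sin ((ph - (psi + th)) / 2)\<bar> = \<bar>sin ((psi + th - ph) / 2)\<bar>"
    by (metis abs_minus_cancel minus_diff_eq minus_divide_left sin_minus)
  have s2: "\<bar>sin ((- ph - (psi + th)) / 2)\<bar> = \<bar>sin ((psi + th + ph) / 2)\<bar>"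
    by (metis (no_types, opaque_lifting) abs_minus_cancel add.commute diff_minus_eq_add minus_diff_eq minus_divide_left sin_minus)
  have s3: "\<bar>sin ((ph - (psi - th)) / 2)\<bar> = \<bar>sin ((psi - th - ph) / 2)\<bar>"
    by (metis abs_minus_cancel minus_diff_eq minus_divide_left sin_minus)
  have s4: "\<bar>sin ((- ph - (psi - th)) / 2)\<bar> = \<bar>sin ((psi - th + ph) / 2)\<bar>"
    by (metis (no_types, opaque_lifting) abs_minus_cancel add.commute diff_minus_eq_add minus_diff_eq minus_divide_left sin_minus)
  have "norm (Phi th ph psi r) \<le> 16 * real n ^ 3 / (1 + real n ^ 2 * D ^ 2 / 4)"
    unfolding Phi_H4
    by (rule H4_norm_final[OF _ _ _ _ assms]) (simp_all add: D_def norm_cis_diff s1 s2 s3 s4 min.coboundedI1 min.coboundedI2)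
  also have "\<dots> = 16 * real n ^ 3 * (1 / (1 + real n ^ 2 * D ^ 2 / 4))" by simp
  also have "\<dots> \<le> 16 * real n ^ 3 * (Fk n (psi + th - ph) + Fk n (psi + th + ph) + Fk n (psi - th - ph) + Fk n (psi - th + ph))"
    using min4_F[of n "psi + th - ph" "psi + th + ph" "psi - th - ph" "psi - th + ph"]
    by (intro mult_left_mono) (simp_all add: D_def)
  finally show ?thesis .
qed


definition sh1 :: "(nat \<Rightarrow> real) \<Rightarrow> nat \<Rightarrow> real" where
  "sh1 f i = (if i < 1 then 0 else f (i - 1))"
definition sh2 :: "(nat \<Rightarrow> real) \<Rightarrow> nat \<Rightarrow> real" where
  "sh2 f i = (if i < 2 then 0 else f (i - 2))"

lemma sbp: "(\<Sum>i\<le>r. f i * (c i - c (i + 2))) =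
   (\<Sum>i\<le>r. (f i - sh2 f i) * c i) - sh1 f r * c (r + 1) - f r * c (r + 2)"
proof (induction r)
  case 0 then show ?case by (simp add: sh1_def sh2_def algebra_simps)
next
  case (Suc r)
  have "sh2 f (Suc r + 0) = sh1 f r" by (simp add: sh1_def sh2_def)
  then show ?case using Suc by (simp add: sh1_def sh2_def algebra_simps)
qed

lemma sum_abs_bound:
  fixes g :: "nat \<Rightarrow> real"
  assumes "\<And>i. i \<le> r \<Longrightarrow> \<bar>g i\<bar> \<le> B"
  shows "\<bar>\<Sum>i\<le>r. g i\<bar> \<le> (real r + 1) * B"
proof -
  have "\<bar>\<Sum>i\<le>r. g i\<bar> \<le> (\<Sum>i\<le>r. \<bar>g i\<bar>)" by (rule sum_abs)
  also have "\<dots> \<le> (\<Sum>i\<le>r. B)" using assms by (intro sum_mono) auto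
  finally show ?thesis by (simp add: algebra_simps)
qed

lemma U_sh2: "\<bar>U i (cos t) - sh2 (\<lambda>l. U l (cos t)) i\<bar> \<le> 2"
proof (cases "i < 2")
  case True
  then have "i = 0 \<or> i = 1" by auto
  then show ?thesis by (auto simp: sh2_def abs_mult)
next
  case False
  then obtain k where k: "i = Suc (Suc k)" by (metis add_2_eq_Suc le_add_diff_inverse not_less)
  have "\<bar>U i (cos t) - sh2 (\<lambda>l. U l (cos t)) i\<bar> = \<bar>2 * cos ((real k + 2) * t)\<bar>"
    using U_diff2[of k t] k by (simp add: sh2_def)
  also have "\<dots> \<le> 2" by (simp add: abs_mult)
  finally show ?thesis .
qed

context
  fixes n :: nat and th ph al be :: real
begin

definition "uu i = U i (cos th)"
definition "vv l = U l (cos ph)"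
definition "cc i = cos (real i * al)"
definition "dd l = cos (real l * be)"
definition "Pd r = (\<Sum>l\<le>r. (vv l - sh2 vv l) * dd l)"

definition "XX = (\<Sum>i\<le>n. \<Sum>l\<le>n - i. uu i * vv l * (cc i - cc (i + 2)) * (dd l - dd (l + 2)))"

definition "QQ r = (\<Sum>i\<le>r. uu i * vv (r - i) * sin ((real i + 1) * al) * cos ((real r + 2 - real i) * be))"

lemma vv_sh2: "\<bar>vv l - sh2 vv l\<bar> \<le> 2"
proof -
  have e: "vv = (\<lambda>l. U l (cos ph))" by (simp add: vv_def fun_eq_iff)
  show ?thesis using U_sh2[of l ph] by (simp add: e)
qed

lemma uu_sh2: "\<bar>uu l - sh2 uu l\<bar> \<le> 2"
proof -
  have e: "uu = (\<lambda>l. U l (cos th))" by (simp add: uu_def fun_eq_iff)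
  show ?thesis using U_sh2[of l th] by (simp add: e)
qed

lemma uu_abs: "\<bar>uu i\<bar> \<le> real i + 1" unfolding uu_def by (rule U_abs)
lemma vv_abs: "\<bar>vv i\<bar> \<le> real i + 1" unfolding vv_def by (rule U_abs)

lemma Pd_abs: "\<bar>Pd r\<bar> \<le> 2 * (real r + 1)"
proof -
  have "\<bar>Pd r\<bar> \<le> (real r + 1) * 2"
    unfolding Pd_def
  proof (rule sum_abs_bound)
    fix l
    have "\<bar>(vv l - sh2 vv l) * dd l\<bar> = \<bar>vv l - sh2 vv l\<bar> * \<bar>dd l\<bar>" by (simp add: abs_mult)
    also have "\<dots> \<le> 2 * 1"
      using vv_sh2[of l] by (intro mult_mono) (auto simp: dd_def)
    finally show "\<bar>(vv l - sh2 vv l) * dd l\<bar> \<le> 2" by simp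
  qed
  then show ?thesis by simp
qed

lemma Pd_step: "\<bar>Pd (r + 2) - Pd r\<bar> \<le> 4"
proof -
  have t: "\<bar>(vv l - sh2 vv l) * dd l\<bar> \<le> 2" for l
  proof -
    have "\<bar>(vv l - sh2 vv l) * dd l\<bar> = \<bar>vv l - sh2 vv l\<bar> * \<bar>dd l\<bar>" by (simp add: abs_mult)
    also have "\<dots> \<le> 2 * 1"
      using vv_sh2[of l] by (intro mult_mono) (auto simp: dd_def)
    finally show ?thesis by simp
  qed
  have "Pd (r + 2) - Pd r = (vv (Suc r) - sh2 vv (Suc r)) * dd (Suc r) + (vv (Suc (Suc r)) - sh2 vv (Suc (Suc r))) * dd (Suc (Suc r))"
    unfolding Pd_def by (simp add: numeral_2_eq_2)
  then show ?thesis using t[of "Suc r"] t[of "Suc (Suc r)"] by linarith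
qed

lemma inner_sbp: "(\<Sum>l\<le>r. vv l * (dd l - dd (l + 2))) = Pd r - (sh1 vv r * dd (r + 1) + vv r * dd (r + 2))"
  using sbp[of vv dd r] unfolding Pd_def by simp

definition "gg i = uu i * Pd (n - i)"

lemma gg_step: "n \<ge> 1 \<Longrightarrow> i \<le> n \<Longrightarrow> \<bar>gg i - sh2 gg i\<bar> \<le> 8 * real n + 4"
proof -
  assume n1: "n \<ge> 1" and i: "i \<le> n"
  show ?thesis
  proof (cases "i < 2")
    case True
    have "\<bar>gg i - sh2 gg i\<bar> = \<bar>uu i\<bar> * \<bar>Pd (n - i)\<bar>" using True by (simp add: sh2_def gg_def abs_mult)
    also have "\<dots> \<le> 2 * (2 * (real n + 1))"
      using uu_abs[of i] Pd_abs[of "n - i"] True i by (intro mult_mono) auto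
    finally show ?thesis using n1 by simp
  next
    case False
    then obtain k where k: "i = k + 2" by (metis add.commute le_Suc_ex not_less)
    have nk: "n - k = (n - i) + 2" using k i by simp
    have "gg i - sh2 gg i = (uu i - sh2 uu i) * Pd (n - i) - uu k * (Pd (n - i + 2) - Pd (n - i))"
      unfolding gg_def sh2_def using k nk by (simp add: algebra_simps)
    moreover have "\<bar>(uu i - sh2 uu i) * Pd (n - i)\<bar> \<le> 2 * (2 * (real n + 1))"
    proof -
      have "\<bar>uu i - sh2 uu i\<bar> \<le> 2" by (rule uu_sh2)
      moreover have "\<bar>Pd (n - i)\<bar> \<le> 2 * (real n + 1)" using Pd_abs[of "n - i"] i by simp
      ultimately show ?thesis unfolding abs_mult by (intro mult_mono) auto
    qed
    moreover have "\<bar>uu k * (Pd (n - i + 2) - Pd (n - i))\<bar> \<le> real n * 4"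
    proof -
      have "\<bar>uu k\<bar> \<le> real n" using uu_abs[of k] k i by simp
      then show ?thesis using Pd_step[of "n - i"] unfolding abs_mult by (intro mult_mono) auto
    qed
    ultimately show ?thesis by (simp add: abs_diff_le_iff) linarith
  qed
qed

lemma A_bound:
  assumes "n \<ge> 1"
  shows "\<bar>\<Sum>i\<le>n. gg i * (cc i - cc (i + 2))\<bar> \<le> 32 * real n ^ 2"
proof -
  have eq: "(\<Sum>i\<le>n. gg i * (cc i - cc (i + 2))) = (\<Sum>i\<le>n. (gg i - sh2 gg i) * cc i) - sh1 gg n * cc (n + 1) - gg n * cc (n + 2)"
    by (rule sbp)
  have a: "\<bar>\<Sum>i\<le>n. (gg i - sh2 gg i) * cc i\<bar> \<le> (real n + 1) * (8 * real n + 4)"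
  proof (rule sum_abs_bound)
    fix i assume "i \<le> n"
    then have "\<bar>gg i - sh2 gg i\<bar> \<le> 8 * real n + 4" using gg_step assms by auto
    moreover have "\<bar>cc i\<bar> \<le> 1" by (simp add: cc_def)
    ultimately show "\<bar>(gg i - sh2 gg i) * cc i\<bar> \<le> 8 * real n + 4"
      by (simp add: abs_mult) (metis abs_ge_zero mult_left_le mult.commute order_trans)
  qed
  have b: "\<bar>sh1 gg n * cc (n + 1)\<bar> \<le> 4 * real n"
  proof -
    have "\<bar>sh1 gg n\<bar> = \<bar>uu (n - 1)\<bar> * \<bar>Pd 1\<bar>"
      using assms by (simp add: sh1_def gg_def abs_mult)
    also have "\<dots> \<le> real n * 4"
      using uu_abs[of "n - 1"] Pd_abs[of 1] assms by (intro mult_mono) auto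
    finally have "\<bar>sh1 gg n\<bar> \<le> 4 * real n" by simp
    moreover have "\<bar>cc (n + 1)\<bar> \<le> 1" by (simp add: cc_def)
    ultimately show ?thesis
      by (simp add: abs_mult) (metis abs_ge_zero mult_left_le mult.commute order_trans)
  qed
  have c: "\<bar>gg n * cc (n + 2)\<bar> \<le> 2 * (real n + 1)"
  proof -
    have "\<bar>gg n\<bar> = \<bar>uu n\<bar> * \<bar>Pd 0\<bar>" by (simp add: gg_def abs_mult)
    also have "\<dots> \<le> (real n + 1) * 2"
      using uu_abs[of n] Pd_abs[of 0] by (intro mult_mono) auto
    finally have "\<bar>gg n\<bar> \<le> 2 * (real n + 1)" by simp
    moreover have "\<bar>cc (n + 2)\<bar> \<le> 1" by (simp add: cc_def)
    ultimately show ?thesis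
      by (simp add: abs_mult) (metis abs_ge_zero mult_left_le mult.commute order_trans)
  qed
  have "\<bar>\<Sum>i\<le>n. gg i * (cc i - cc (i + 2))\<bar> \<le> (real n + 1) * (8 * real n + 4) + 4 * real n + 2 * (real n + 1)"
    unfolding eq using a b c by linarith
  also have "\<dots> \<le> 32 * real n ^ 2"
  proof -
    have n1: "real n \<ge> 1" using assms by simp
    have h1: "real n * 1 \<le> real n * real n" using n1 by (intro mult_left_mono) auto
    have h2: "1 \<le> real n * real n" using n1 h1 by linarith
    show ?thesis using h1 h2 by (simp add: algebra_simps power2_eq_square)

  qed
  finally show ?thesis .
qed

lemma cc_diff: "cc i - cc (i + 2) = 2 * sin al * sin ((real i + 1) * al)"
proof -
  have e1: "(real i * al + real (i + 2) * al) / 2 = (real i + 1) * al" by (simp add: algebra_simps)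
  have e2: "(real (i + 2) * al - real i * al) / 2 = al" by (simp add: algebra_simps)
  show ?thesis unfolding cc_def cos_diff_cos e1 e2 by simp
qed

lemma XX_split: "XX = (\<Sum>i\<le>n. gg i * (cc i - cc (i + 2))) -
   (\<Sum>i\<le>n. uu i * (cc i - cc (i + 2)) * (sh1 vv (n - i) * dd (n - i + 1) + vv (n - i) * dd (n - i + 2)))"
proof -
  have "XX = (\<Sum>i\<le>n. uu i * (cc i - cc (i + 2)) * (\<Sum>l\<le>n - i. vv l * (dd l - dd (l + 2))))"
    unfolding XX_def by (simp add: sum_distrib_left algebra_simps)
  also have "\<dots> = (\<Sum>i\<le>n. uu i * (cc i - cc (i + 2)) * (Pd (n - i) - (sh1 vv (n - i) * dd (n - i + 1) + vv (n - i) * dd (n - i + 2))))"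
    by (simp only: inner_sbp)
  also have "\<dots> = (\<Sum>i\<le>n. gg i * (cc i - cc (i + 2))) -
   (\<Sum>i\<le>n. uu i * (cc i - cc (i + 2)) * (sh1 vv (n - i) * dd (n - i + 1) + vv (n - i) * dd (n - i + 2)))"
    by (simp add: gg_def sum_subtractf[symmetric] algebra_simps)
  finally show ?thesis .
qed

lemma R_eq:
  assumes "n \<ge> 1"
  shows "(\<Sum>i\<le>n. uu i * (cc i - cc (i + 2)) * (sh1 vv (n - i) * dd (n - i + 1) + vv (n - i) * dd (n - i + 2)))
     = 2 * sin al * (QQ (n - 1) + QQ n)"
proof -
  obtain m where m: "n = Suc m" using assms by (cases n) auto
  have a: "(\<Sum>i\<le>n. uu i * (cc i - cc (i + 2)) * (vv (n - i) * dd (n - i + 2))) = 2 * sin al * QQ n"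
    unfolding QQ_def sum_distrib_left
  proof (rule sum.cong)
    fix i assume "i \<in> {..n}"
    then have e: "real (n - i + 2) * be = (real n + 2 - real i) * be" by (simp add: of_nat_diff)
    show "uu i * (cc i - cc (i + 2)) * (vv (n - i) * dd (n - i + 2)) =
      2 * sin al * (uu i * vv (n - i) * sin ((real i + 1) * al) * cos ((real n + 2 - real i) * be))"
      by (simp only: cc_diff dd_def e) (simp add: algebra_simps)
  qed simp
  have b: "(\<Sum>i\<le>n. uu i * (cc i - cc (i + 2)) * (sh1 vv (n - i) * dd (n - i + 1))) = 2 * sin al * QQ (n - 1)"
  proof -
    have "(\<Sum>i\<le>n. uu i * (cc i - cc (i + 2)) * (sh1 vv (n - i) * dd (n - i + 1))) =
          (\<Sum>i\<le>m. uu i * (cc i - cc (i + 2)) * (sh1 vv (n - i) * dd (n - i + 1)))"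
      unfolding m by (simp add: sh1_def)
    also have "\<dots> = 2 * sin al * QQ m"
      unfolding QQ_def sum_distrib_left
    proof (rule sum.cong)
      fix i assume "i \<in> {..m}"
      then have i: "i \<le> m" by simp
      then have e: "real (n - i + 1) * be = (real m + 2 - real i) * be" using m by (simp add: of_nat_diff)
      moreover have e2: "sh1 vv (n - i) = vv (m - i)" using i m by (simp add: sh1_def Suc_diff_le)
      show "uu i * (cc i - cc (i + 2)) * (sh1 vv (n - i) * dd (n - i + 1)) =
        2 * sin al * (uu i * vv (m - i) * sin ((real i + 1) * al) * cos ((real m + 2 - real i) * be))"
        by (simp only: cc_diff dd_def e e2) (simp add: algebra_simps)
    qed simp
    finally show ?thesis using m by simp
  qed
  have "(\<Sum>i\<le>n. uu i * (cc i - cc (i + 2)) * (sh1 vv (n - i) * dd (n - i + 1) + vv (n - i) * dd (n - i + 2)))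
     = (\<Sum>i\<le>n. uu i * (cc i - cc (i + 2)) * (sh1 vv (n - i) * dd (n - i + 1))) +
       (\<Sum>i\<le>n. uu i * (cc i - cc (i + 2)) * (vv (n - i) * dd (n - i + 2)))"
    by (simp only: distrib_left sum.distrib)
  also have "\<dots> = 2 * sin al * QQ (n - 1) + 2 * sin al * QQ n" by (simp only: a b)
  finally show ?thesis by (simp add: distrib_left)
qed

lemma Im_Phi: "Im (cis c * Phi th ph psi r) = (\<Sum>i\<le>r. uu i * vv (r - i) * sin (real i * psi + c))"
  unfolding Phi_def uu_def vv_def sum_distrib_left Im_sum
  by (intro sum.cong) (simp_all add: sin_add algebra_simps)

lemma QQ_bound: "\<bar>QQ r\<bar> \<le> (norm (Phi th ph (al - be) r) + norm (Phi th ph (al + be) r)) / 2"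
proof -
  define c1 where "c1 = al + (real r + 2) * be"
  define c2 where "c2 = al - (real r + 2) * be"
  have "QQ r = (Im (cis c1 * Phi th ph (al - be) r) + Im (cis c2 * Phi th ph (al + be) r)) / 2"
    unfolding Im_Phi QQ_def
    unfolding sum_divide_distrib sum.distrib[symmetric]
  proof (rule sum.cong)
    fix i assume "i \<in> {..r}"
    have e1: "(real i + 1) * al + (real r + 2 - real i) * be = real i * (al - be) + c1"
      unfolding c1_def by (simp add: algebra_simps)
    have e2: "(real i + 1) * al - (real r + 2 - real i) * be = real i * (al + be) + c2"
      unfolding c2_def by (simp add: algebra_simps)
    show "uu i * vv (r - i) * sin ((real i + 1) * al) * cos ((real r + 2 - real i) * be) =
       (uu i * vv (r - i) * sin (real i * (al - be) + c1) + uu i * vv (r - i) * sin (real i * (al + be) + c2)) / 2"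
      using sin_times_cos[of "(real i + 1) * al" "(real r + 2 - real i) * be"]
      unfolding e1 e2 by (simp add: algebra_simps add_divide_distrib)
  qed simp
  also have "\<bar>\<dots>\<bar> \<le> (norm (cis c1 * Phi th ph (al - be) r) + norm (cis c2 * Phi th ph (al + be) r)) / 2"
    using abs_Im_le_cmod[of "cis c1 * Phi th ph (al - be) r"] abs_Im_le_cmod[of "cis c2 * Phi th ph (al + be) r"]
    by simp
  also have "\<dots> = (norm (Phi th ph (al - be) r) + norm (Phi th ph (al + be) r)) / 2"
    by (simp add: norm_mult)
  finally show ?thesis .
qed

lemma XX_bound:
  assumes "n \<ge> 1"
  shows "\<bar>XX\<bar> \<le> 32 * real n ^ 2 +
     (norm (Phi th ph (al - be) (n - 1)) + norm (Phi th ph (al + be) (n - 1)) +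
      norm (Phi th ph (al - be) n) + norm (Phi th ph (al + be) n))"
proof -
  have "\<bar>XX\<bar> \<le> \<bar>\<Sum>i\<le>n. gg i * (cc i - cc (i + 2))\<bar> + \<bar>2 * sin al * (QQ (n - 1) + QQ n)\<bar>"
    unfolding XX_split R_eq[OF assms] by (rule abs_triangle_ineq4)
  moreover have "\<bar>2 * sin al * (QQ (n - 1) + QQ n)\<bar> \<le> 2 * (\<bar>QQ (n - 1)\<bar> + \<bar>QQ n\<bar>)"
  proof -
    have "\<bar>2 * sin al * (QQ (n - 1) + QQ n)\<bar> = 2 * \<bar>sin al\<bar> * \<bar>QQ (n - 1) + QQ n\<bar>" by (simp add: abs_mult)
    also have "\<dots> \<le> 2 * 1 * (\<bar>QQ (n - 1)\<bar> + \<bar>QQ n\<bar>)"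
      by (intro mult_mono) (auto simp: abs_triangle_ineq)
    finally show ?thesis by simp
  qed
  moreover note A_bound[OF assms] QQ_bound[of "n - 1"] QQ_bound[of n]
  ultimately show ?thesis by argo
qed

end


lemma sin_ge_third: assumes "0 \<le> x" "x \<le> pi / 2" shows "x \<le> 3 * sin x"
proof -
  have b: "\<bar>sin x - (\<Sum>m<3. sin_coeff m * x ^ m)\<bar> \<le> inverse (fact 3) * \<bar>x\<bar> ^ 3"
    by (rule Maclaurin_sin_bound)
  have s: "(\<Sum>m<3. sin_coeff m * x ^ m) = x"
    by (simp add: numeral_3_eq_3 sin_coeff_def)
  have x2: "x \<le> 2" using assms pi_less_4 by linarith
  have "x ^ 3 = x * x\<^sup>2" by (simp add: power2_eq_square power3_eq_cube)
  also have "\<dots> \<le> x * 4" using assms x2 by (intro mult_left_mono) (auto simp: power2_eq_square intro: mult_mono[of x 2 x 2, simplified])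
  finally have c: "x ^ 3 \<le> 4 * x" by simp
  have f: "fact 3 = (6::real)" by (simp add: numeral_3_eq_3)
  have "\<bar>sin x - x\<bar> * 6 \<le> x ^ 3" using b assms unfolding s f by simp
  moreover have "x - sin x \<le> \<bar>sin x - x\<bar>" by simp
  ultimately have "(x - sin x) * 6 \<le> x ^ 3" by (smt (verit) mult_right_mono)
  then have "6 * x - 6 * sin x \<le> x ^ 3" by (simp add: algebra_simps)
  then show ?thesis using c by linarith
qed

lemma sin_lower_3:
  assumes "0 \<le> t" "t \<le> 3 * pi / 2"
  shows "min t \<bar>t - pi\<bar> \<le> 3 * \<bar>sin t\<bar>"
proof -
  consider "t \<le> pi / 2" | "pi / 2 \<le> t" "t \<le> pi" | "pi \<le> t" by linarith
  then show ?thesis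
  proof cases
    case 1
    then have "t \<le> 3 * sin t" using sin_ge_third assms by auto
    then show ?thesis using min.cobounded1[of t "\<bar>t - pi\<bar>"] abs_ge_self[of "sin t"] by linarith
  next
    case 2
    then have "pi - t \<le> 3 * sin (pi - t)" using sin_ge_third[of "pi - t"] by auto
    moreover have "sin (pi - t) = sin t" by simp
    moreover have "\<bar>t - pi\<bar> = pi - t" using 2 by simp
    ultimately show ?thesis using min.cobounded2[of t "\<bar>t - pi\<bar>"] abs_ge_self[of "sin t"] by linarith
  next
    case 3
    then have "t - pi \<le> 3 * sin (t - pi)" using sin_ge_third[of "t - pi"] assms by auto
    moreover have "sin (t - pi) = - sin t" by (simp add: sin_diff)
    moreover have "\<bar>t - pi\<bar> = t - pi" using 3 by simp
    ultimately show ?thesis using min.cobounded2[of t "\<bar>t - pi\<bar>"] abs_ge_minus_self[of "sin t"] by linarith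
  qed
qed

lemma sum_inv_sq_nat: "(\<Sum>q\<le>Q. 1 / (1 + real q ^ 2)) \<le> 3 - 2 / (real Q + 1)"
proof (induction Q)
  case 0 then show ?case by simp
next
  case (Suc Q)
  have "1 / (1 + (real Q + 1) ^ 2) \<le> 2 / (real Q + 1) - 2 / (real Q + 2)"
  proof -
    have c1: "2 / (real Q + 1) - 2 / (real Q + 2) = 2 / ((real Q + 1) * (real Q + 2))"
      by (simp add: field_simps)
    have c2: "(real Q + 1) * (real Q + 2) \<le> 2 * (1 + (real Q + 1) ^ 2)"
      by (simp add: power2_eq_square algebra_simps)
    note calc = c1 c2
    have aux: "\<And>a b::real. a > 0 \<Longrightarrow> b > 0 \<Longrightarrow> b \<le> 2 * a \<Longrightarrow> 1 / a \<le> 2 / b"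
      by (simp add: field_simps)
    have "1 / (1 + (real Q + 1) ^ 2) \<le> 2 / ((real Q + 1) * (real Q + 2))"
      by (rule aux) (use calc(2) in \<open>auto intro!: add_pos_nonneg mult_pos_pos\<close>)
    then show ?thesis using calc(1) by simp
  qed
  then show ?case using Suc by (simp add: ac_simps)
qed

lemma sum_inv_sq_nat_set: "finite Q \<Longrightarrow> (\<Sum>q\<in>Q. 1 / (1 + real q ^ 2)) \<le> 3"
proof -
  assume fin: "finite Q"
  define M where "M = (if Q = {} then 0 else Max Q)"
  have sub: "Q \<subseteq> {..M}" using fin by (auto simp: M_def)
  have "(\<Sum>q\<in>Q. 1 / (1 + real q ^ 2)) \<le> (\<Sum>q\<le>M. 1 / (1 + real q ^ 2))"
    by (rule sum_mono2[OF _ sub]) auto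
  also have "\<dots> \<le> 3 - 2 / (real M + 1)" by (rule sum_inv_sq_nat)
  also have "\<dots> \<le> 3" by simp
  finally show ?thesis .
qed

lemma sum_inv_sq_int:
  fixes A :: "int set" and g :: real
  assumes "finite A"
  shows "(\<Sum>k\<in>A. 1 / (1 + (real_of_int k - g) ^ 2)) \<le> 6"
proof -
  define Ap where "Ap = {k\<in>A. g \<le> real_of_int k}"
  define Am where "Am = {k\<in>A. \<not> g \<le> real_of_int k}"
  have split: "(\<Sum>k\<in>A. 1 / (1 + (real_of_int k - g) ^ 2)) =
     (\<Sum>k\<in>Ap. 1 / (1 + (real_of_int k - g) ^ 2)) + (\<Sum>k\<in>Am. 1 / (1 + (real_of_int k - g) ^ 2))"
  proof -
    have "A = Ap \<union> Am" "Ap \<inter> Am = {}" unfolding Ap_def Am_def by auto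
    moreover have "finite Ap" "finite Am" using assms by (auto simp: Ap_def Am_def)
    ultimately show ?thesis by (simp add: sum.union_disjoint)
  qed
  have fp: "finite Ap" "finite Am" using assms by (auto simp: Ap_def Am_def)
  define k0 where "k0 = \<lceil>g\<rceil>"
  have p: "(\<Sum>k\<in>Ap. 1 / (1 + (real_of_int k - g) ^ 2)) \<le> 3"
  proof -
    have "(\<Sum>k\<in>Ap. 1 / (1 + (real_of_int k - g) ^ 2)) \<le> (\<Sum>k\<in>Ap. 1 / (1 + real (nat (k - k0)) ^ 2))"
    proof (rule sum_mono)
      fix k assume k: "k \<in> Ap"
      then have "g \<le> real_of_int k" by (simp add: Ap_def)
      then have kk: "k0 \<le> k" unfolding k0_def by (simp add: ceiling_le_iff)
      have "real (nat (k - k0)) = real_of_int k - real_of_int k0" using kk by simp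
      moreover have "real_of_int k0 \<ge> g" unfolding k0_def by simp
      ultimately have "0 \<le> real (nat (k - k0))" "real (nat (k - k0)) \<le> real_of_int k - g" by auto
      then have "real (nat (k - k0)) ^ 2 \<le> (real_of_int k - g) ^ 2" by (intro power_mono) auto
      then show "1 / (1 + (real_of_int k - g) ^ 2) \<le> 1 / (1 + real (nat (k - k0)) ^ 2)"
        by (intro divide_left_mono) (auto intro!: add_pos_nonneg mult_pos_pos)
    qed
    also have "\<dots> = (\<Sum>q\<in>(\<lambda>k. nat (k - k0)) ` Ap. 1 / (1 + real q ^ 2))"
    proof (rule sum.reindex[symmetric, unfolded comp_def])
      show "inj_on (\<lambda>k. nat (k - k0)) Ap"
      proof (rule inj_onI)
        fix x y assume "x \<in> Ap" "y \<in> Ap" "nat (x - k0) = nat (y - k0)"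
        moreover have "k0 \<le> x" "k0 \<le> y" using \<open>x \<in> Ap\<close> \<open>y \<in> Ap\<close> unfolding k0_def Ap_def by (auto simp: ceiling_le_iff)
        ultimately show "x = y" by simp
      qed
    qed
    also have "\<dots> \<le> 3" by (rule sum_inv_sq_nat_set) (use fp in auto)
    finally show ?thesis .
  qed
  define k1 where "k1 = \<lfloor>g\<rfloor>"
  have m: "(\<Sum>k\<in>Am. 1 / (1 + (real_of_int k - g) ^ 2)) \<le> 3"
  proof -
    have "(\<Sum>k\<in>Am. 1 / (1 + (real_of_int k - g) ^ 2)) \<le> (\<Sum>k\<in>Am. 1 / (1 + real (nat (k1 - k)) ^ 2))"
    proof (rule sum_mono)
      fix k assume k: "k \<in> Am"
      then have "real_of_int k < g" by (simp add: Am_def)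
      then have kk: "k \<le> k1" unfolding k1_def by (simp add: le_floor_iff)
      have "real (nat (k1 - k)) = real_of_int k1 - real_of_int k" using kk by simp
      moreover have "real_of_int k1 \<le> g" unfolding k1_def by simp
      ultimately have "0 \<le> real (nat (k1 - k))" "real (nat (k1 - k)) \<le> g - real_of_int k" by auto
      then have "real (nat (k1 - k)) ^ 2 \<le> (g - real_of_int k) ^ 2" by (intro power_mono) auto
      also have "(g - real_of_int k) ^ 2 = (real_of_int k - g) ^ 2" by (simp add: power2_commute)
      finally show "1 / (1 + (real_of_int k - g) ^ 2) \<le> 1 / (1 + real (nat (k1 - k)) ^ 2)"
        by (intro divide_left_mono) (auto intro!: add_pos_nonneg mult_pos_pos)
    qed
    also have "\<dots> = (\<Sum>q\<in>(\<lambda>k. nat (k1 - k)) ` Am. 1 / (1 + real q ^ 2))"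
    proof (rule sum.reindex[symmetric, unfolded comp_def])
      show "inj_on (\<lambda>k. nat (k1 - k)) Am"
      proof (rule inj_onI)
        fix x y assume "x \<in> Am" "y \<in> Am" "nat (k1 - x) = nat (k1 - y)"
        moreover have "x \<le> k1" "y \<le> k1" using \<open>x \<in> Am\<close> \<open>y \<in> Am\<close> unfolding k1_def Am_def by (auto simp: le_floor_iff)
        ultimately show "x = y" by simp
      qed
    qed
    also have "\<dots> \<le> 3" by (rule sum_inv_sq_nat_set) (use fp in auto)
    finally show ?thesis .
  qed
  show ?thesis using split p m by linarith
qed


lemma sin_sq_shift: "sin (x - real_of_int l * pi) ^ 2 = sin x ^ 2"
proof -
  have "sin (x - real_of_int l * pi) = sin x * cos (pi * real_of_int l)"
    by (simp add: sin_diff mult.commute)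
  then show ?thesis by (simp add: power_mult_distrib)
qed

lemma inv_quad_le:
  fixes a x :: real
  assumes "a \<ge> 1 / 15"
  shows "1 / (1 + a * x ^ 2) \<le> 15 / (1 + x ^ 2)"
proof -
  have p1: "1 + x ^ 2 > 0" by (intro add_pos_nonneg) auto
  have "x ^ 2 \<le> 15 * a * x ^ 2"
  proof -
    have "1 * x ^ 2 \<le> (15 * a) * x ^ 2" using assms by (intro mult_right_mono) auto
    then show ?thesis by simp
  qed
  then have "1 + x ^ 2 \<le> 15 * (1 + a * x ^ 2)" by (simp add: algebra_simps)
  moreover have p2: "1 + a * x ^ 2 > 0" using assms by (intro add_pos_nonneg) auto
  ultimately show ?thesis using p1 by (simp add: field_simps)
qed

lemma L1D:
  assumes n2: "n \<ge> 2"
  shows "(\<Sum>k\<in>{1..n div 2 + 1}. 1 / (1 + real n ^ 2 * sin (real k * (pi / (real n + 3)) + c) ^ 2)) \<le> 180"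
proof -
  define h where "h = pi / (real n + 3)"
  have hpos: "h > 0" unfolding h_def by simp
  define l0 where "l0 = \<lfloor>(h + c) / pi\<rfloor>"
  define t where "t k = real k * h + c - real_of_int l0 * pi" for k :: nat
  define g where "g = (real_of_int l0 * pi - c) / h"
  have Mh: "pi / h = real n + 3" unfolding h_def by simp
  have t_eq: "t k = h * (real k - g)" for k
    unfolding t_def g_def using hpos by (simp add: field_simps)
  have t_eq2: "t k - pi = h * (real k - (g + (real n + 3)))" for k
    unfolding t_eq using Mh hpos by (simp add: field_simps)
  have t1: "0 \<le> t 1" "t 1 < pi"
  proof -
    have "real_of_int l0 \<le> (h + c) / pi" "(h + c) / pi < real_of_int l0 + 1" unfolding l0_def by linarith+
    then show "0 \<le> t 1" "t 1 < pi" unfolding t_def by (simp_all add: field_simps)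
  qed
  have trange: "0 \<le> t k \<and> t k \<le> 3 * pi / 2" if k: "k \<in> {1..n div 2 + 1}" for k
  proof -
    have "t k = t 1 + (real k - 1) * h" unfolding t_def by (simp add: algebra_simps)
    moreover have "(real k - 1) * h \<le> pi / 2"
    proof -
      have "real k - 1 \<le> real n / 2" using k by auto
      then have "(real k - 1) * h \<le> real n / 2 * h" using hpos by (intro mult_right_mono) auto
      also have "\<dots> \<le> pi / 2" unfolding h_def by (simp add: field_simps)
      finally show ?thesis .
    qed
    moreover have "0 \<le> (real k - 1) * h" using k hpos by auto
    ultimately show ?thesis using t1 by linarith
  qed
  have a_ge: "real n ^ 2 * h ^ 2 / 9 \<ge> 1 / 15"
  proof -
    have "real n * 5 \<ge> 2 * (real n + 3)" using n2 by simp
    then have "real n / (real n + 3) \<ge> 2 / 5" by (simp add: field_simps)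
    moreover have "pi \<ge> 2" by (rule pi_ge_two)
    ultimately have "real n * h \<ge> 4 / 5" unfolding h_def
      using mult_mono[of "2/5" "real n / (real n + 3)" 2 pi] by (simp add: field_simps)
    then have "(4/5) ^ 2 \<le> (real n * h) ^ 2" by (intro power_mono) auto
    moreover have "((4::real)/5) ^ 2 = 16 / 25" by (simp add: power2_eq_square)
    ultimately have "16 / 25 \<le> real n ^ 2 * h ^ 2" by (simp add: power_mult_distrib)
    then show ?thesis by linarith
  qed
  have tm: "1 / (1 + real n ^ 2 * sin (real k * h + c) ^ 2) \<le>
      15 / (1 + (real k - g) ^ 2) + 15 / (1 + (real k - (g + (real n + 3))) ^ 2)"
    if k: "k \<in> {1..n div 2 + 1}" for k
  proof -
    have s: "sin (real k * h + c) ^ 2 = sin (t k) ^ 2"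
      unfolding t_def using sin_sq_shift[of "real k * h + c" l0] by simp
    have m3: "min (t k) \<bar>t k - pi\<bar> \<le> 3 * \<bar>sin (t k)\<bar>"
      using sin_lower_3 trange[OF k] by auto
    have mm: "min (t k) \<bar>t k - pi\<bar> \<ge> 0" using trange[OF k] by auto
    have "(min (t k) \<bar>t k - pi\<bar>) ^ 2 \<le> (3 * \<bar>sin (t k)\<bar>) ^ 2"
      using m3 mm by (intro power_mono) auto
    then have sq: "(min (t k) \<bar>t k - pi\<bar>) ^ 2 / 9 \<le> sin (t k) ^ 2" by (simp add: power_mult_distrib)
    define mn where "mn = min (t k) \<bar>t k - pi\<bar>"
    have "1 / (1 + real n ^ 2 * sin (real k * h + c) ^ 2) \<le> 1 / (1 + real n ^ 2 * (mn ^ 2 / 9))"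
      unfolding s mn_def using sq
      by (intro divide_left_mono add_left_mono mult_left_mono mult_pos_pos add_pos_nonneg) auto
    also have "\<dots> \<le> 1 / (1 + real n ^ 2 * ((t k) ^ 2 / 9)) + 1 / (1 + real n ^ 2 * ((t k - pi) ^ 2 / 9))"
    proof -
      have "mn ^ 2 = (t k) ^ 2 \<or> mn ^ 2 = (t k - pi) ^ 2" unfolding mn_def by (auto simp: min_def)
      moreover have "0 \<le> 1 / (1 + real n ^ 2 * ((t k) ^ 2 / 9))" "0 \<le> 1 / (1 + real n ^ 2 * ((t k - pi) ^ 2 / 9))"
        by (auto intro!: add_nonneg_nonneg)
      ultimately show ?thesis by auto
    qed
    also have "1 / (1 + real n ^ 2 * ((t k) ^ 2 / 9)) = 1 / (1 + (real n ^ 2 * h ^ 2 / 9) * (real k - g) ^ 2)"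
      unfolding t_eq power_mult_distrib by (simp add: field_simps)
    also have "1 / (1 + real n ^ 2 * ((t k - pi) ^ 2 / 9)) = 1 / (1 + (real n ^ 2 * h ^ 2 / 9) * (real k - (g + (real n + 3))) ^ 2)"
      unfolding t_eq2 power_mult_distrib by (simp add: field_simps)
    finally show ?thesis using inv_quad_le[OF a_ge, of "real k - g"] inv_quad_le[OF a_ge, of "real k - (g + (real n + 3))"]
      by linarith
  qed
  have reidx: "(\<Sum>k\<in>{1..n div 2 + 1}. 15 / (1 + (real k - g') ^ 2)) \<le> 90" for g'
  proof -
    have "(\<Sum>k\<in>{1..n div 2 + 1}. 15 / (1 + (real k - g') ^ 2)) = 15 * (\<Sum>k\<in>{1..n div 2 + 1}. 1 / (1 + (real k - g') ^ 2))"
      by (simp add: sum_distrib_left)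
    also have "(\<Sum>k\<in>{1..n div 2 + 1}. 1 / (1 + (real k - g') ^ 2)) = (\<Sum>j\<in>int ` {1..n div 2 + 1}. 1 / (1 + (real_of_int j - g') ^ 2))"
      by (subst sum.reindex) (auto simp: inj_on_def)
    also have "\<dots> \<le> 6" by (rule sum_inv_sq_int) auto
    finally show ?thesis by simp
  qed
  have "(\<Sum>k\<in>{1..n div 2 + 1}. 1 / (1 + real n ^ 2 * sin (real k * h + c) ^ 2)) \<le>
        (\<Sum>k\<in>{1..n div 2 + 1}. 15 / (1 + (real k - g) ^ 2) + 15 / (1 + (real k - (g + (real n + 3))) ^ 2))"
    by (rule sum_mono) (rule tm)
  also have "\<dots> \<le> 90 + 90" unfolding sum.distrib using reidx[of g] reidx[of "g + (real n + 3)"] by linarith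
  finally show ?thesis unfolding h_def by simp
qed


definition alpha :: "nat \<Rightarrow> nat \<Rightarrow> real" where "alpha n m = real m * pi / (real n + 2)"
definition beta :: "nat \<Rightarrow> nat \<Rightarrow> real" where "beta n j = real j * pi / (real n + 3)"
definition jj :: "nat \<Rightarrow> nat \<Rightarrow> nat" where "jj m k = (if odd m then 2 * k else 2 * k - 1)"
definition IDX :: "nat \<Rightarrow> (nat \<times> nat) set" where "IDX n = {1..n+1} \<times> {1..n div 2 + 1}"
definition TRI :: "nat \<Rightarrow> (nat \<times> nat) set" where "TRI n = Sigma {..n} (\<lambda>i. {..n - i})"

definition LL :: "nat \<Rightarrow> nat \<times> nat \<Rightarrow> real \<times> real \<Rightarrow> real" where
  "LL n a p = 8 / ((real n + 2) * (real n + 3)) * sin (alpha n (fst a)) * sin (beta n (jj (fst a) (snd a))) *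
     (\<Sum>(i, l)\<in>TRI n. U i (fst p) * U l (snd p) * sin ((real i + 1) * alpha n (fst a)) * sin ((real l + 1) * beta n (jj (fst a) (snd a))))"

definition Fs :: "nat \<Rightarrow> real \<Rightarrow> real \<Rightarrow> real \<Rightarrow> real" where
  "Fs n th ph psi = Fk n (psi + th - ph) + Fk n (psi + th + ph) + Fk n (psi - th - ph) + Fk n (psi - th + ph)"

lemma real_jj: "k \<ge> 1 \<Longrightarrow> real (jj m k) = 2 * real k - (if odd m then 0 else 1)"
  by (auto simp: jj_def of_nat_diff)

lemma Fk_line_plus:
  assumes "n \<ge> 2"
  shows "(\<Sum>k\<in>{1..n div 2 + 1}. Fk n (c + beta n (jj m k))) \<le> 180"
proof -
  define e :: real where "e = (if odd m then 0 else 1)"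
  define c' where "c' = c / 2 - e * (pi / (real n + 3)) / 2"
  have "(\<Sum>k\<in>{1..n div 2 + 1}. Fk n (c + beta n (jj m k))) =
        (\<Sum>k\<in>{1..n div 2 + 1}. 1 / (1 + real n ^ 2 * sin (real k * (pi / (real n + 3)) + c') ^ 2))"
  proof (rule sum.cong)
    fix k assume "k \<in> {1..n div 2 + 1}"
    then have rj: "real (jj m k) = 2 * real k - e" using real_jj[of k m] by (simp add: e_def)
    have eq: "(c + beta n (jj m k)) / 2 = real k * (pi / (real n + 3)) + c'"
    proof -
      define h where "h = pi / (real n + 3)"
      have b: "beta n (jj m k) = (2 * real k - e) * h" unfolding beta_def h_def rj by simp
      show ?thesis unfolding b c'_def h_def[symmetric] by (simp add: field_simps)
    qed
    show "Fk n (c + beta n (jj m k)) = 1 / (1 + real n ^ 2 * sin (real k * (pi / (real n + 3)) + c') ^ 2)"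
      unfolding Fk_def eq ..
  qed simp
  also have "\<dots> \<le> 180" by (rule L1D[OF assms])
  finally show ?thesis .
qed

lemma Fk_line_minus:
  assumes "n \<ge> 2"
  shows "(\<Sum>k\<in>{1..n div 2 + 1}. Fk n (c - beta n (jj m k))) \<le> 180"
proof -
  have "Fk n (c - beta n (jj m k)) = Fk n (- c + beta n (jj m k))" for k
  proof -
    have "sin ((c - beta n (jj m k)) / 2) ^ 2 = sin ((- c + beta n (jj m k)) / 2) ^ 2"
    proof -
      have "(- c + beta n (jj m k)) / 2 = - ((c - beta n (jj m k)) / 2)"
        by (metis minus_diff_eq minus_divide_left uminus_add_conv_diff)
      then show ?thesis by (simp only: sin_minus) simp
    qed
    then show ?thesis by (simp add: Fk_def)
  qed
  then show ?thesis using Fk_line_plus[OF assms, of "- c" m] by simp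
qed

lemma grid_bound:
  assumes "n \<ge> 2"
  shows "(\<Sum>a\<in>IDX n. Fs n th ph (alpha n (fst a) - beta n (jj (fst a) (snd a))) + Fs n th ph (alpha n (fst a) + beta n (jj (fst a) (snd a))))
     \<le> 1440 * (real n + 1)"
proof -
  have "(\<Sum>a\<in>IDX n. Fs n th ph (alpha n (fst a) - beta n (jj (fst a) (snd a))) + Fs n th ph (alpha n (fst a) + beta n (jj (fst a) (snd a))))
      = (\<Sum>m\<in>{1..n+1}. \<Sum>k\<in>{1..n div 2 + 1}. Fs n th ph (alpha n m - beta n (jj m k)) + Fs n th ph (alpha n m + beta n (jj m k)))"
    unfolding IDX_def sum.cartesian_product by (simp only: split_def)
  also have "\<dots> \<le> (\<Sum>m\<in>{1..n+1}. 1440)"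
  proof (rule sum_mono)
    fix m
    define S where "S c = (\<Sum>k\<in>{1..n div 2 + 1}. Fk n (c - beta n (jj m k)))" for c
    define T where "T c = (\<Sum>k\<in>{1..n div 2 + 1}. Fk n (c + beta n (jj m k)))" for c
    have S: "S c \<le> 180" for c unfolding S_def by (rule Fk_line_minus[OF assms])
    have T: "T c \<le> 180" for c unfolding T_def by (rule Fk_line_plus[OF assms])
    let ?a = "alpha n m"
    have "(\<Sum>k\<in>{1..n div 2 + 1}. Fs n th ph (?a - beta n (jj m k)) + Fs n th ph (?a + beta n (jj m k)))
       = S (?a + th - ph) + S (?a + th + ph) + S (?a - th - ph) + S (?a - th + ph) +
         T (?a + th - ph) + T (?a + th + ph) + T (?a - th - ph) + T (?a - th + ph)"
      unfolding S_def T_def Fs_def sum.distrib[symmetric]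
      by (intro sum.cong refl) (simp add: algebra_simps)
    also have "\<dots> \<le> 1440" using S T
      by (smt (verit) S T)
    finally show "(\<Sum>k\<in>{1..n div 2 + 1}. Fs n th ph (?a - beta n (jj m k)) + Fs n th ph (?a + beta n (jj m k))) \<le> 1440" .
  qed
  also have "\<dots> = 1440 * (real n + 1)" by simp
  finally show ?thesis .
qed

lemma sum_TRI: "(\<Sum>(i, l)\<in>TRI n. f i l) = (\<Sum>i\<le>n. \<Sum>l\<le>n - i. f i l)"
  unfolding TRI_def by (subst sum.Sigma) auto

lemma LL_XX:
  assumes "\<bar>x\<bar> \<le> 1" "\<bar>y\<bar> \<le> 1"
  shows "LL n a (x, y) = 2 / ((real n + 2) * (real n + 3)) *
           XX n (arccos x) (arccos y) (alpha n (fst a)) (beta n (jj (fst a) (snd a)))"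
proof -
  define al where "al = alpha n (fst a)"
  define be where "be = beta n (jj (fst a) (snd a))"
  have cx: "cos (arccos x) = x" and cy: "cos (arccos y) = y" using assms by (auto simp: cos_arccos_abs)
  have dd_cc: "dd be l = cc be l" for l by (simp add: dd_def cc_def)
  have "XX n (arccos x) (arccos y) al be =
        (\<Sum>i\<le>n. \<Sum>l\<le>n - i. 4 * sin al * sin be * (U i x * U l y * sin ((real i + 1) * al) * sin ((real l + 1) * be)))"
    unfolding XX_def uu_def vv_def cx cy dd_cc cc_diff by (simp add: algebra_simps)
  also have "\<dots> = 4 * sin al * sin be * (\<Sum>(i, l)\<in>TRI n. U i x * U l y * sin ((real i + 1) * al) * sin ((real l + 1) * be))"
    unfolding sum_TRI by (simp add: sum_distrib_left)
  finally have "XX n (arccos x) (arccos y) al be = 4 * sin al * sin be * (\<Sum>(i, l)\<in>TRI n. U i x * U l y * sin ((real i + 1) * al) * sin ((real l + 1) * be))" .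
  then show ?thesis unfolding LL_def al_def[symmetric] be_def[symmetric] by simp
qed

lemma LL_bound:
  assumes "n \<ge> 1" "\<bar>x\<bar> \<le> 1" "\<bar>y\<bar> \<le> 1"
  shows "\<bar>LL n a (x, y)\<bar> \<le> 2 / ((real n + 2) * (real n + 3)) *
     (32 * real n ^ 2 + 32 * real n ^ 3 * (Fs n (arccos x) (arccos y) (alpha n (fst a) - beta n (jj (fst a) (snd a))) +
                                        Fs n (arccos x) (arccos y) (alpha n (fst a) + beta n (jj (fst a) (snd a)))))"
proof -
  define al where "al = alpha n (fst a)"
  define be where "be = beta n (jj (fst a) (snd a))"
  define th where "th = arccos x"
  define ph where "ph = arccos y"
  have P: "cmod (Phi th ph psi r) \<le> 16 * real n ^ 3 * Fs n th ph psi" if "r \<le> n" for psi r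
    unfolding Fs_def using Phi_bound[OF assms(1) that] by simp
  have X: "\<bar>XX n th ph al be\<bar> \<le> 32 * real n ^ 2 + 32 * real n ^ 3 * (Fs n th ph (al - be) + Fs n th ph (al + be))"
    using XX_bound[OF assms(1), of th ph al be] P[of "n - 1" "al - be"] P[of "n - 1" "al + be"] P[of n "al - be"] P[of n "al + be"]
    by (simp add: algebra_simps)
  have "\<bar>LL n a (x, y)\<bar> = 2 / ((real n + 2) * (real n + 3)) * \<bar>XX n th ph al be\<bar>"
    unfolding LL_XX[OF assms(2,3)] th_def ph_def al_def be_def by (simp add: abs_mult)
  also have "\<dots> \<le> 2 / ((real n + 2) * (real n + 3)) * (32 * real n ^ 2 + 32 * real n ^ 3 * (Fs n th ph (al - be) + Fs n th ph (al + be)))"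
    using X by (intro mult_left_mono) auto
  finally show ?thesis unfolding th_def ph_def al_def be_def .
qed

lemma card_IDX: "card (IDX n) = (n + 1) * (n div 2 + 1)"
  unfolding IDX_def by (simp add: card_cartesian_product)

lemma lebesgue_sum_bound:
  assumes "n \<ge> 2" "\<bar>x\<bar> \<le> 1" "\<bar>y\<bar> \<le> 1"
  shows "(\<Sum>a\<in>IDX n. \<bar>LL n a (x, y)\<bar>) \<le> 100000 * real n ^ 2"
proof -
  define K where "K = 2 / ((real n + 2) * (real n + 3))"
  have Kpos: "K > 0" unfolding K_def by simp
  define G where "G a = Fs n (arccos x) (arccos y) (alpha n (fst a) - beta n (jj (fst a) (snd a))) +
                        Fs n (arccos x) (arccos y) (alpha n (fst a) + beta n (jj (fst a) (snd a)))" for a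
  have "(\<Sum>a\<in>IDX n. \<bar>LL n a (x, y)\<bar>) \<le> (\<Sum>a\<in>IDX n. K * (32 * real n ^ 2 + 32 * real n ^ 3 * G a))"
    using LL_bound[of n x y] assms unfolding K_def G_def by (intro sum_mono) auto
  also have "\<dots> = (\<Sum>a\<in>IDX n. K * (32 * real n ^ 2)) + (\<Sum>a\<in>IDX n. (K * (32 * real n ^ 3)) * G a)"
    by (simp only: distrib_left mult.assoc sum.distrib)
  also have "\<dots> = real (card (IDX n)) * (K * (32 * real n ^ 2)) + (K * (32 * real n ^ 3)) * (\<Sum>a\<in>IDX n. G a)"
    by (simp only: sum_constant sum_distrib_left[symmetric])
  also have "\<dots> = K * (32 * real n ^ 2 * real (card (IDX n)) + 32 * real n ^ 3 * (\<Sum>a\<in>IDX n. G a))"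
    by (simp add: algebra_simps)
  also have "\<dots> \<le> K * (32 * real n ^ 2 * ((real n + 2) * (real n + 3)) + 32 * real n ^ 3 * (1440 * (real n + 1)))"
  proof -
    have c: "real (card (IDX n)) \<le> (real n + 2) * (real n + 3)"
    proof -
      have "real (card (IDX n)) = (real n + 1) * (real (n div 2) + 1)" by (simp add: card_IDX algebra_simps)
      also have "\<dots> \<le> (real n + 2) * (real n + 3)"
      proof -
        have "real (n div 2) \<le> real n" by simp
        then show ?thesis by (intro mult_mono) auto
      qed
      finally show ?thesis .
    qed
    have g: "(\<Sum>a\<in>IDX n. G a) \<le> 1440 * (real n + 1)"
      unfolding G_def by (rule grid_bound[OF assms(1)])
    show ?thesis using Kpos c g
      by (intro mult_left_mono add_mono) (auto intro!: mult_left_mono)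
  qed
  also have "\<dots> \<le> K * (46112 * real n ^ 2 * ((real n + 2) * (real n + 3)))"
  proof -
    have "real n * (real n + 1) \<le> (real n + 2) * (real n + 3)" by (simp add: algebra_simps)
    then have "real n ^ 2 * (real n * (real n + 1)) \<le> real n ^ 2 * ((real n + 2) * (real n + 3))"
      by (intro mult_left_mono) auto
    then have "32 * real n ^ 3 * (1440 * (real n + 1)) \<le> 46080 * real n ^ 2 * ((real n + 2) * (real n + 3))"
      by (simp add: power2_eq_square power3_eq_cube algebra_simps)
    then show ?thesis using Kpos by (intro mult_left_mono) (auto simp: algebra_simps)
  qed
  also have "\<dots> = 92224 * real n ^ 2"
  proof -
    have D0: "(real n + 2) * (real n + 3) \<noteq> 0" by simp
    have KD: "K * ((real n + 2) * (real n + 3)) = 2" using D0 K_def nonzero_eq_divide_eq by blast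
    have "K * (46112 * real n ^ 2 * ((real n + 2) * (real n + 3))) = 46112 * real n ^ 2 * (K * ((real n + 2) * (real n + 3)))"
      by (simp only: ac_simps)
    then show ?thesis using KD by simp
  qed
  also have "\<dots> \<le> 100000 * real n ^ 2" by simp
  finally show ?thesis .
qed


lemma cos_sum_tele: "2 * sin (x / 2) * (\<Sum>m\<in>{1..K}. cos (real m * x)) = sin ((real K + 1 / 2) * x) - sin (x / 2)"
proof (induction K)
  case 0 then show ?case by simp
next
  case (Suc K)
  have "2 * sin (x / 2) * cos ((real K + 1) * x) = sin ((real K + 1 + 1 / 2) * x) - sin ((real K + 1 / 2) * x)"
  proof -
    have "2 * sin (x / 2) * cos ((real K + 1) * x) = sin (x / 2 + (real K + 1) * x) + sin (x / 2 - (real K + 1) * x)"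
      using sin_times_cos[of "x / 2" "(real K + 1) * x"] by simp
    moreover have "x / 2 + (real K + 1) * x = (real K + 1 + 1 / 2) * x" by (simp add: algebra_simps)
    moreover have "sin (x / 2 - (real K + 1) * x) = - sin ((real K + 1 / 2) * x)"
    proof -
      have "x / 2 - (real K + 1) * x = - ((real K + 1 / 2) * x)" by (simp add: algebra_simps)
      then show ?thesis by simp
    qed
    ultimately show ?thesis by simp
  qed
  then show ?case using Suc by (simp add: algebra_simps)
qed

definition cs :: "nat \<Rightarrow> nat \<Rightarrow> real" where
  "cs N l = (\<Sum>m\<in>{1..N - 1}. cos (real m * (real l * pi / real N)))"

lemma cs_zero: "cs N 0 = real N - 1" if "N \<ge> 1"
  using that by (simp add: cs_def of_nat_diff)

lemma cs_pos:
  assumes "0 < l" "l < 2 * N"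
  shows "cs N l = - (1 + (-1) ^ l) / 2"
proof -
  have N1: "N \<ge> 1" using assms by simp
  define x where "x = real l * pi / real N"
  have s_pos: "sin (x / 2) > 0"
  proof -
    have "x / 2 = real l * pi / (2 * real N)" unfolding x_def by simp
    moreover have "0 < real l * pi / (2 * real N)" using assms by simp
    moreover have "real l * pi / (2 * real N) < pi"
    proof -
      have "real l < 2 * real N" using assms by linarith
      then show ?thesis using N1 by (simp add: field_simps)
    qed
    ultimately show ?thesis by (simp add: sin_gt_zero)
  qed
  have "(real (N - 1) + 1 / 2) * x = real l * pi - x / 2"
    unfolding x_def using N1 by (simp add: of_nat_diff field_simps)
  then have "sin ((real (N - 1) + 1 / 2) * x) = sin (real l * pi - x / 2)" by simp
  also have "\<dots> = - ((-1) ^ l) * sin (x / 2)" by (simp add: sin_diff)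
  finally have "2 * sin (x / 2) * cs N l = - ((-1) ^ l) * sin (x / 2) - sin (x / 2)"
    using cos_sum_tele[of x "N - 1"] unfolding cs_def x_def by simp
  then have "sin (x / 2) * (2 * cs N l + (1 + (-1) ^ l)) = 0" by (simp add: algebra_simps)
  then have "2 * cs N l + (1 + (-1) ^ l) = 0" using s_pos by simp
  then show ?thesis by (simp add: eq_divide_eq)
qed

definition ss :: "nat \<Rightarrow> nat \<Rightarrow> nat \<Rightarrow> real" where
  "ss N p q = (\<Sum>m\<in>{1..N - 1}. sin (real p * (real m * pi / real N)) * sin (real q * (real m * pi / real N)))"

lemma ss_sym: "ss N p q = ss N q p"
  unfolding ss_def by (simp add: mult.commute)

lemma ss_lt:
  assumes "1 \<le> p" "p < q" "q \<le> N - 1"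
  shows "ss N p q = 0"
proof -
  have "ss N p q = (cs N (q - p) - cs N (p + q)) / 2"
    unfolding ss_def cs_def sum_subtractf[symmetric] sum_divide_distrib
  proof (rule sum.cong)
    fix m assume "m \<in> {1..N - 1}"
    have e1: "real p * (real m * pi / real N) - real q * (real m * pi / real N) = - (real m * (real (q - p) * pi / real N))"
      using assms by (simp add: of_nat_diff field_simps)
    have e2: "real p * (real m * pi / real N) + real q * (real m * pi / real N) = real m * (real (p + q) * pi / real N)"
      by (simp add: add_divide_distrib algebra_simps)
    show "sin (real p * (real m * pi / real N)) * sin (real q * (real m * pi / real N)) =
        (cos (real m * (real (q - p) * pi / real N)) - cos (real m * (real (p + q) * pi / real N))) / 2"
      unfolding sin_times_sin e1 e2 by simp
  qed simp
  also have "\<dots> = 0"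
  proof -
    have a: "cs N (q - p) = - (1 + (-1) ^ (q - p)) / 2" using assms by (intro cs_pos) auto
    have b: "cs N (p + q) = - (1 + (-1) ^ (p + q)) / 2" using assms by (intro cs_pos) auto
    have "(-1::real) ^ (p + q) = (-1) ^ (q - p)"
    proof -
      have e: "p + q = (q - p) + 2 * p" using assms by simp
      show ?thesis by (subst e) (simp add: power_add power_mult del: power_Suc)
    qed
    then show ?thesis using a b by simp
  qed
  finally show ?thesis .
qed

lemma ss_eq:
  assumes "1 \<le> p" "p \<le> N - 1"
  shows "ss N p p = real N / 2"
proof -
  have "ss N p p = (cs N 0 - cs N (2 * p)) / 2"
    unfolding ss_def cs_def sum_subtractf[symmetric] sum_divide_distrib
  proof (rule sum.cong)
    fix m assume "m \<in> {1..N - 1}"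
    have e: "real p * (real m * pi / real N) + real p * (real m * pi / real N) = real m * (real (2 * p) * pi / real N)"
      by (simp add: field_simps)
    show "sin (real p * (real m * pi / real N)) * sin (real p * (real m * pi / real N)) =
        (cos (real m * (real 0 * pi / real N)) - cos (real m * (real (2 * p) * pi / real N))) / 2"
      unfolding sin_times_sin e by simp
  qed simp
  also have "\<dots> = real N / 2"
  proof -
    have "cs N 0 = real N - 1" using assms by (intro cs_zero) auto
    moreover have "cs N (2 * p) = - (1 + (-1) ^ (2 * p)) / 2" using assms by (intro cs_pos) auto
    ultimately show ?thesis by simp
  qed
  finally show ?thesis .
qed

lemma ss_orth:
  assumes "1 \<le> p" "p \<le> N - 1" "1 \<le> q" "q \<le> N - 1"
  shows "ss N p q = (if p = q then real N / 2 else 0)"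
proof (cases "p = q")
  case True then show ?thesis using ss_eq assms by simp
next
  case False
  then have "p < q \<or> q < p" by arith
  then show ?thesis using ss_lt[of p q N] ss_lt[of q p N] ss_sym[of N p q] assms False by auto
qed

lemma alt_sin:
  assumes "p \<le> N" "N \<ge> 1"
  shows "(-1) ^ m * sin (real p * (real m * pi / real N)) = - sin (real (N - p) * (real m * pi / real N))"
proof -
  have "real (N - p) * (real m * pi / real N) = real m * pi - real p * (real m * pi / real N)"
    using assms by (simp add: of_nat_diff field_simps)
  then show ?thesis by (simp add: sin_diff)
qed

lemma ss_alt:
  assumes "1 \<le> p" "p \<le> N - 1" "1 \<le> q" "q \<le> N - 1"
  shows "(\<Sum>m\<in>{1..N - 1}. (-1) ^ m * (sin (real p * (real m * pi / real N)) * sin (real q * (real m * pi / real N))))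
     = - (if p + q = N then real N / 2 else 0)"
proof -
  have "(\<Sum>m\<in>{1..N - 1}. (-1) ^ m * (sin (real p * (real m * pi / real N)) * sin (real q * (real m * pi / real N))))
     = - ss N (N - p) q"
    unfolding ss_def sum_negf[symmetric]
    by (intro sum.cong refl) (use alt_sin[of p N] assms in \<open>simp add: mult.assoc[symmetric]\<close>)
  also have "ss N (N - p) q = (if N - p = q then real N / 2 else 0)"
    using assms by (intro ss_orth) auto
  also have "(N - p = q) = (p + q = N)" using assms by auto
  finally show ?thesis by simp
qed


lemma parity_sum:
  assumes "even n"
  shows "(\<Sum>k\<in>{1..n div 2 + 1}. g (jj m k)) = (\<Sum>j\<in>{1..n+2}. if odd (m + j) then g j else (0::real))"
proof -
  obtain t where t: "n = 2 * t" using assms by blast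
  have img: "jj m ` {1..n div 2 + 1} = {j\<in>{1..n+2}. odd (m + j)}"
  proof (intro set_eqI iffI)
    fix j assume "j \<in> jj m ` {1..n div 2 + 1}"
    then obtain k where k: "k \<in> {1..t + 1}" "j = jj m k" using t by auto
    then show "j \<in> {j\<in>{1..n+2}. odd (m + j)}" using t by (auto simp: jj_def)
  next
    fix j assume j: "j \<in> {j\<in>{1..n+2}. odd (m + j)}"
    show "j \<in> jj m ` {1..n div 2 + 1}"
    proof (cases "odd m")
      case True
      then have "even j" using j by auto
      then obtain k where k: "j = 2 * k" by blast
      then have "j = jj m k" "k \<in> {1..n div 2 + 1}" using True j t by (auto simp: jj_def)
      then show ?thesis by blast
    next
      case False
      then have "odd j" using j by auto
      then obtain k where k: "j = 2 * k + 1" using oddE by blast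
      then have "j = jj m (k + 1)" "k + 1 \<in> {1..n div 2 + 1}" using False j t by (auto simp: jj_def)
      then show ?thesis by blast
    qed
  qed
  have inj: "inj_on (jj m) {1..n div 2 + 1}" by (auto simp: inj_on_def jj_def)
  have "(\<Sum>j\<in>{1..n+2}. if odd (m + j) then g j else (0::real)) = (\<Sum>j\<in>{j\<in>{1..n+2}. odd (m + j)}. g j)"
    by (rule sum.inter_filter[symmetric]) simp
  also have "\<dots> = (\<Sum>j\<in>jj m ` {1..n div 2 + 1}. g j)" by (simp only: img)
  also have "\<dots> = (\<Sum>k\<in>{1..n div 2 + 1}. g (jj m k))" by (simp only: sum.reindex[OF inj] comp_def)
  finally show ?thesis by simp
qed

definition SS :: "nat \<Rightarrow> nat \<times> nat \<Rightarrow> nat \<times> nat \<Rightarrow> real" where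
  "SS n a \<iota> = sin ((real (fst \<iota>) + 1) * alpha n (fst a)) * sin ((real (snd \<iota>) + 1) * beta n (jj (fst a) (snd a)))"

lemma alpha_eq: "(real i + 1) * alpha n m = real (i + 1) * (real m * pi / real (n + 2))"
  by (simp add: alpha_def add.commute)
lemma beta_eq: "(real i + 1) * beta n m = real (i + 1) * (real m * pi / real (n + 3))"
  by (simp add: beta_def add.commute)

lemma orth_primal:
  assumes "even n" "\<iota> \<in> TRI n" "\<kappa> \<in> TRI n"
  shows "(\<Sum>a\<in>IDX n. SS n a \<iota> * SS n a \<kappa>) = (if \<iota> = \<kappa> then (real n + 2) * (real n + 3) / 8 else 0)"
proof -
  obtain i l where il: "\<iota> = (i, l)" by fastforce
  obtain i' l' where il': "\<kappa> = (i', l')" by fastforce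
  have tri: "i + l \<le> n" "i' + l' \<le> n" using assms(2,3) il il' by (auto simp: TRI_def)
  define A where "A m = sin (real (i + 1) * (real m * pi / real (n + 2))) * sin (real (i' + 1) * (real m * pi / real (n + 2)))" for m
  define B where "B j = sin (real (l + 1) * (real j * pi / real (n + 3))) * sin (real (l' + 1) * (real j * pi / real (n + 3)))" for j
  define Y where "Y = (\<Sum>j\<in>{1..n+2}. B j)"
  define Y' where "Y' = (\<Sum>j\<in>{1..n+2}. (-1) ^ j * B j)"
  have SSe: "SS n a \<iota> * SS n a \<kappa> = A (fst a) * B (jj (fst a) (snd a))" for a
    unfolding SS_def il il' A_def B_def alpha_eq beta_eq by (simp add: ac_simps)
  have "(\<Sum>a\<in>IDX n. SS n a \<iota> * SS n a \<kappa>) = (\<Sum>m\<in>{1..n+1}. \<Sum>k\<in>{1..n div 2 + 1}. A m * B (jj m k))"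
    unfolding SSe IDX_def sum.cartesian_product by (simp only: split_def)
  also have "\<dots> = (\<Sum>m\<in>{1..n+1}. A m * (\<Sum>j\<in>{1..n+2}. if odd (m + j) then B j else 0))"
    by (simp only: sum_distrib_left[symmetric] parity_sum[OF assms(1)])
  also have "\<dots> = (\<Sum>m\<in>{1..n+1}. A m * ((Y - (-1) ^ m * Y') / 2))"
  proof (rule sum.cong[OF refl])
    fix m
    have "(\<Sum>j\<in>{1..n+2}. if odd (m + j) then B j else 0) = (\<Sum>j\<in>{1..n+2}. (B j - (-1) ^ m * ((-1) ^ j * B j)) / 2)"
      by (intro sum.cong refl) (auto simp: power_add[symmetric])
    also have "\<dots> = (Y - (-1) ^ m * Y') / 2"
      unfolding Y_def Y'_def by (simp only: sum_distrib_left sum_subtractf[symmetric] sum_divide_distrib)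
    finally show "A m * (\<Sum>j\<in>{1..n+2}. if odd (m + j) then B j else 0) = A m * ((Y - (-1) ^ m * Y') / 2)" by simp
  qed
  also have "\<dots> = (\<Sum>m\<in>{1..n+1}. (Y * A m - Y' * ((-1) ^ m * A m)) / 2)"
    by (intro sum.cong refl) (simp add: algebra_simps)
  also have "\<dots> = (Y * (\<Sum>m\<in>{1..n+1}. A m) - Y' * (\<Sum>m\<in>{1..n+1}. (-1) ^ m * A m)) / 2"
    by (simp only: sum_divide_distrib[symmetric] sum_subtractf sum_distrib_left)
  finally have main: "(\<Sum>a\<in>IDX n. SS n a \<iota> * SS n a \<kappa>) = (Y * (\<Sum>m\<in>{1..n+1}. A m) - Y' * (\<Sum>m\<in>{1..n+1}. (-1) ^ m * A m)) / 2" .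
  have sA: "(\<Sum>m\<in>{1..n+1}. A m) = (if i = i' then (real n + 2) / 2 else 0)"
  proof -
    have "(\<Sum>m\<in>{1..n+1}. A m) = ss (n + 2) (i + 1) (i' + 1)" unfolding A_def ss_def by simp
    also have "\<dots> = (if i + 1 = i' + 1 then real (n + 2) / 2 else 0)" using tri by (intro ss_orth) auto
    finally show ?thesis by simp
  qed
  have sA': "(\<Sum>m\<in>{1..n+1}. (-1) ^ m * A m) = - (if i + i' = n then (real n + 2) / 2 else 0)"
  proof -
    have "(\<Sum>m\<in>{1..n+1}. (-1) ^ m * A m) = - (if (i + 1) + (i' + 1) = n + 2 then real (n + 2) / 2 else 0)"
      unfolding A_def using ss_alt[of "i + 1" "n + 2" "i' + 1"] tri by simp
    then show ?thesis by simp
  qed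
  have sY: "Y = (if l = l' then (real n + 3) / 2 else 0)"
  proof -
    have "Y = ss (n + 3) (l + 1) (l' + 1)" unfolding Y_def B_def ss_def by simp
    also have "\<dots> = (if l + 1 = l' + 1 then real (n + 3) / 2 else 0)" using tri by (intro ss_orth) auto
    finally show ?thesis by simp
  qed
  have sY': "Y' = - (if l + l' = n + 1 then (real n + 3) / 2 else 0)"
  proof -
    have "Y' = - (if (l + 1) + (l' + 1) = n + 3 then real (n + 3) / 2 else 0)"
      unfolding Y'_def B_def using ss_alt[of "l + 1" "n + 3" "l' + 1"] tri by simp
    then show ?thesis by simp
  qed
  show ?thesis unfolding main sA sA' sY sY' using tri il il' by (auto simp: field_simps)
qed

lemma proj_lemma:
  fixes V :: "'a \<Rightarrow> 'b \<Rightarrow> real"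
  assumes fA: "finite A" and fI: "finite I" and card: "card A = card I" and c: "c > 0"
    and orth: "\<And>\<iota> \<kappa>. \<iota> \<in> I \<Longrightarrow> \<kappa> \<in> I \<Longrightarrow> (\<Sum>a\<in>A. V a \<iota> * V a \<kappa>) = (if \<iota> = \<kappa> then c else 0)"
    and a: "a \<in> A" and b: "b \<in> A"
  shows "(\<Sum>\<iota>\<in>I. V a \<iota> * V b \<iota>) = (if a = b then c else 0)"
proof -
  define P where "P x y = (\<Sum>\<iota>\<in>I. V x \<iota> * V y \<iota>) / c" for x y
  have Psym: "P x y = P y x" for x y unfolding P_def by (simp add: mult.commute)
  have idem: "(\<Sum>y\<in>A. P x y * P y z) = P x z" for x z
  proof -
    have e1: "P x y * P y z = (\<Sum>\<iota>\<in>I. \<Sum>\<kappa>\<in>I. V x \<iota> * V z \<kappa> * (V y \<iota> * V y \<kappa>)) / c ^ 2" for y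
    proof -
      have "P x y * P y z = ((\<Sum>\<iota>\<in>I. V x \<iota> * V y \<iota>) * (\<Sum>\<kappa>\<in>I. V y \<kappa> * V z \<kappa>)) / c ^ 2"
        by (simp add: P_def power2_eq_square)
      also have "\<dots> = (\<Sum>\<iota>\<in>I. \<Sum>\<kappa>\<in>I. (V x \<iota> * V y \<iota>) * (V y \<kappa> * V z \<kappa>)) / c ^ 2"
        by (simp only: sum_product)
      also have "\<dots> = (\<Sum>\<iota>\<in>I. \<Sum>\<kappa>\<in>I. V x \<iota> * V z \<kappa> * (V y \<iota> * V y \<kappa>)) / c ^ 2"
        by (intro arg_cong[where f="\<lambda>t. t / c ^ 2"] sum.cong refl) (simp add: ac_simps)
      finally show ?thesis .
    qed
    have "(\<Sum>y\<in>A. P x y * P y z) = (\<Sum>y\<in>A. \<Sum>\<iota>\<in>I. \<Sum>\<kappa>\<in>I. V x \<iota> * V z \<kappa> * (V y \<iota> * V y \<kappa>)) / c ^ 2"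
      unfolding e1 by (simp only: sum_divide_distrib)
    also have "(\<Sum>y\<in>A. \<Sum>\<iota>\<in>I. \<Sum>\<kappa>\<in>I. V x \<iota> * V z \<kappa> * (V y \<iota> * V y \<kappa>)) = (\<Sum>\<iota>\<in>I. \<Sum>\<kappa>\<in>I. V x \<iota> * V z \<kappa> * (\<Sum>y\<in>A. V y \<iota> * V y \<kappa>))"
    proof -
      have "(\<Sum>y\<in>A. \<Sum>\<iota>\<in>I. \<Sum>\<kappa>\<in>I. V x \<iota> * V z \<kappa> * (V y \<iota> * V y \<kappa>)) = (\<Sum>\<iota>\<in>I. \<Sum>y\<in>A. \<Sum>\<kappa>\<in>I. V x \<iota> * V z \<kappa> * (V y \<iota> * V y \<kappa>))"
        by (rule sum.swap)
      also have "\<dots> = (\<Sum>\<iota>\<in>I. \<Sum>\<kappa>\<in>I. \<Sum>y\<in>A. V x \<iota> * V z \<kappa> * (V y \<iota> * V y \<kappa>))"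
        by (intro sum.cong refl) (rule sum.swap)
      finally show ?thesis by (simp only: sum_distrib_left)
    qed
    also have "\<dots> = (\<Sum>\<iota>\<in>I. \<Sum>\<kappa>\<in>I. V x \<iota> * V z \<kappa> * (if \<iota> = \<kappa> then c else 0))"
      by (intro sum.cong refl) (simp add: orth)
    also have "\<dots> = (\<Sum>\<iota>\<in>I. V x \<iota> * V z \<iota> * c)"
      using fI by (simp add: if_distrib sum.delta cong: if_cong)
    finally have fin: "(\<Sum>y\<in>A. P x y * P y z) = (\<Sum>\<iota>\<in>I. V x \<iota> * V z \<iota> * c) / c ^ 2" .
    have "(\<Sum>\<iota>\<in>I. V x \<iota> * V z \<iota> * c) / c ^ 2 = P x z"
      unfolding P_def sum_distrib_right[symmetric] using c by (simp add: power2_eq_square)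
    with fin show ?thesis by simp
  qed
  have diag: "P x x = (\<Sum>y\<in>A. P x y ^ 2)" for x
  proof -
    have "P x x = (\<Sum>y\<in>A. P x y * P y x)" using idem[of x x] by simp
    also have "\<dots> = (\<Sum>y\<in>A. P x y ^ 2)"
    proof (rule sum.cong[OF refl])
      fix y show "P x y * P y x = P x y ^ 2" using Psym[of y x] by (simp add: power2_eq_square)
    qed
    finally show ?thesis .
  qed
  have Pnn: "P x x \<ge> 0" for x unfolding diag by (intro sum_nonneg) auto
  have Ple1: "P x x \<le> 1" if "x \<in> A" for x
  proof -
    have "P x x ^ 2 \<le> (\<Sum>y\<in>A. P x y ^ 2)"
      using that fA by (intro member_le_sum) auto
    then have "P x x * P x x \<le> P x x * 1" using diag[of x] by (simp add: power2_eq_square)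
    then show ?thesis using Pnn[of x]
      by (cases "P x x = 0") (auto simp: mult_le_cancel_left)
  qed
  have trace: "(\<Sum>x\<in>A. P x x) = real (card A)"
  proof -
    have "(\<Sum>x\<in>A. P x x) = (\<Sum>x\<in>A. \<Sum>\<iota>\<in>I. V x \<iota> * V x \<iota>) / c"
      unfolding P_def by (simp only: sum_divide_distrib)
    also have "(\<Sum>x\<in>A. \<Sum>\<iota>\<in>I. V x \<iota> * V x \<iota>) = (\<Sum>\<iota>\<in>I. \<Sum>x\<in>A. V x \<iota> * V x \<iota>)"
      by (rule sum.swap)
    also have "\<dots> = (\<Sum>\<iota>\<in>I. c)" by (rule sum.cong[OF refl]) (simp add: orth)
    also have "(\<Sum>\<iota>\<in>I. c) / c = real (card I)" using c by simp
    finally show ?thesis using card by simp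
  qed
  have all1: "P x x = 1" if "x \<in> A" for x
  proof -
    have "(\<Sum>x\<in>A. 1 - P x x) = 0" using trace by (simp add: sum_subtractf)
    moreover have "(\<Sum>x\<in>A. 1 - P x x) = 0 \<longleftrightarrow> (\<forall>x\<in>A. 1 - P x x = 0)"
      by (rule sum_nonneg_eq_0_iff[OF fA]) (use Ple1 in auto)
    ultimately have "\<forall>x\<in>A. 1 - P x x = 0" by simp
    then have "1 - P x x = 0" using that by blast
    then show ?thesis by simp
  qed
  have off0: "P x y = 0" if "x \<in> A" "y \<in> A" "x \<noteq> y" for x y
  proof -
    have "(\<Sum>z\<in>A. P x z ^ 2) = P x x ^ 2 + (\<Sum>z\<in>A - {x}. P x z ^ 2)"
      using that fA by (simp add: sum.remove)
    moreover have "(\<Sum>z\<in>A. P x z ^ 2) = 1" using diag[of x] all1[OF that(1)] by simp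
    moreover have "P x x ^ 2 = 1" using all1[OF that(1)] by simp
    ultimately have s0: "(\<Sum>z\<in>A - {x}. P x z ^ 2) = 0" by simp
    have "\<forall>z\<in>A - {x}. P x z ^ 2 = 0"
      using sum_nonneg_eq_0_iff[of "A - {x}" "\<lambda>z. P x z ^ 2"] fA s0 by simp
    then show ?thesis using that by auto
  qed
  show ?thesis
  proof (cases "a = b")
    case True
    have "(\<Sum>\<iota>\<in>I. V a \<iota> * V a \<iota>) / c = 1" using all1[OF a] unfolding P_def .
    then have "(\<Sum>\<iota>\<in>I. V a \<iota> * V a \<iota>) = c" by (simp only: divide_eq_1_iff)
    then show ?thesis using True by simp
  next
    case False
    have "(\<Sum>\<iota>\<in>I. V a \<iota> * V b \<iota>) / c = 0" using off0[OF a b False] unfolding P_def .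
    then have "(\<Sum>\<iota>\<in>I. V a \<iota> * V b \<iota>) = 0" using c by (simp only: divide_eq_0_iff) simp
    then show ?thesis using False by simp
  qed
qed


fun Up :: "nat \<Rightarrow> real poly" where
  "Up 0 = 1"
| "Up (Suc 0) = [:0, 2:]"
| "Up (Suc (Suc i)) = [:0, 2:] * Up (Suc i) - Up i"

lemma poly_Up: "poly (Up i) x = U i x"
  by (induction i rule: Up.induct) simp_all

lemma deg_Up: "degree (Up i) \<le> i"
proof (induction i rule: Up.induct)
  case 1 then show ?case by simp
next
  case 2 then show ?case by simp
next
  case (3 i)
  have "degree ([:0, 2:] * Up (Suc i)) \<le> Suc (Suc i)"
    using degree_mult_le[of "[:0, 2:]" "Up (Suc i)"] 3(1) by simp
  then show ?case using degree_diff_le_max[of "[:0, 2:] * Up (Suc i)" "Up i"] 3(2) by simp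
qed

lemma coeff_Up: "coeff (Up i) i = 2 ^ i"
proof (induction i rule: Up.induct)
  case 1 then show ?case by simp
next
  case 2 then show ?case by simp
next
  case (3 i)
  have c0: "coeff (Up i) (Suc (Suc i)) = 0" using deg_Up[of i] by (intro coeff_eq_0) simp
  have "[:0, 2:] * Up (Suc i) = pCons 0 (smult 2 (Up (Suc i)))" by (simp add: mult_pCons_left)
  then have "coeff ([:0, 2:] * Up (Suc i)) (Suc (Suc i)) = 2 * coeff (Up (Suc i)) (Suc i)" by simp
  then show ?case using 3(1) c0 by simp
qed

lemma U_as_sum: "i \<le> d \<Longrightarrow> U i x = (\<Sum>p\<le>d. coeff (Up i) p * x ^ p)"
proof -
  assume id: "i \<le> d"
  have "U i x = (\<Sum>p\<le>degree (Up i). coeff (Up i) p * x ^ p)" by (simp add: poly_altdef poly_Up[symmetric])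
  also have "\<dots> = (\<Sum>p\<le>d. coeff (Up i) p * x ^ p)"
    using deg_Up[of i] id by (intro sum.mono_neutral_left) (auto simp: coeff_eq_0)
  finally show ?thesis .
qed

lemma poly2_zero: "(\<lambda>p. 0) \<in> poly2 n"
  unfolding poly2_def by (rule CollectI, rule exI[of _ "\<lambda>i j. 0"]) simp

lemma poly2_add: "f \<in> poly2 n \<Longrightarrow> g \<in> poly2 n \<Longrightarrow> (\<lambda>p. f p + g p) \<in> poly2 n"
proof -
  assume "f \<in> poly2 n" "g \<in> poly2 n"
  then obtain c d where c: "\<forall>x y. f (x, y) = (\<Sum>i\<le>n. \<Sum>j\<le>n - i. c i j * x ^ i * y ^ j)"
    and d: "\<forall>x y. g (x, y) = (\<Sum>i\<le>n. \<Sum>j\<le>n - i. d i j * x ^ i * y ^ j)" unfolding poly2_def by blast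
  show ?thesis unfolding poly2_def
    by (rule CollectI, rule exI[of _ "\<lambda>i j. c i j + d i j"]) (simp add: c d sum.distrib[symmetric] algebra_simps)
qed

lemma poly2_scale: "f \<in> poly2 n \<Longrightarrow> (\<lambda>p. a * f p) \<in> poly2 n"
proof -
  assume "f \<in> poly2 n"
  then obtain c where c: "\<forall>x y. f (x, y) = (\<Sum>i\<le>n. \<Sum>j\<le>n - i. c i j * x ^ i * y ^ j)"
    unfolding poly2_def by blast
  show ?thesis unfolding poly2_def
    by (rule CollectI, rule exI[of _ "\<lambda>i j. a * c i j"]) (simp add: c sum_distrib_left algebra_simps)
qed

lemma poly2_sum: "finite F \<Longrightarrow> (\<And>t. t \<in> F \<Longrightarrow> g t \<in> poly2 n) \<Longrightarrow> (\<lambda>p. \<Sum>t\<in>F. g t p) \<in> poly2 n"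
proof (induction F rule: finite_induct)
  case empty then show ?case using poly2_zero by simp
next
  case (insert t F)
  have "(\<lambda>p. g t p + (\<Sum>t\<in>F. g t p)) \<in> poly2 n"
    using insert by (intro poly2_add) auto
  then show ?case using insert by simp
qed

lemma poly2_diff: "f \<in> poly2 n \<Longrightarrow> g \<in> poly2 n \<Longrightarrow> (\<lambda>p. f p - g p) \<in> poly2 n"
  using poly2_add[of f n "\<lambda>p. (-1) * g p"] poly2_scale[of g n "-1"] by simp

lemma poly2_UU:
  assumes "i + l \<le> n"
  shows "(\<lambda>p. U i (fst p) * U l (snd p)) \<in> poly2 n"
  unfolding poly2_def
proof (rule CollectI, rule exI[of _ "\<lambda>p q. coeff (Up i) p * coeff (Up l) q"], intro allI)
  fix x y :: real
  have "(\<Sum>p\<le>n. \<Sum>q\<le>n - p. coeff (Up i) p * coeff (Up l) q * x ^ p * y ^ q)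
      = (\<Sum>p\<le>n. coeff (Up i) p * x ^ p * U l y)"
  proof (rule sum.cong[OF refl])
    fix p assume p: "p \<in> {..n}"
    show "(\<Sum>q\<le>n - p. coeff (Up i) p * coeff (Up l) q * x ^ p * y ^ q) = coeff (Up i) p * x ^ p * U l y"
    proof (cases "p \<le> i")
      case True
      then have "l \<le> n - p" using assms by simp
      then have "U l y = (\<Sum>q\<le>n - p. coeff (Up l) q * y ^ q)" by (rule U_as_sum)
      then show ?thesis by (simp add: sum_distrib_left algebra_simps)
    next
      case False
      then have "coeff (Up i) p = 0" using deg_Up[of i] by (intro coeff_eq_0) simp
      then show ?thesis by simp
    qed
  qed
  also have "\<dots> = U i x * U l y"
    using U_as_sum[of i n x] assms by (simp add: sum_distrib_right)
  finally show "U i (fst (x, y)) * U l (snd (x, y)) = (\<Sum>p\<le>n. \<Sum>q\<le>n - p. coeff (Up i) p * coeff (Up l) q * x ^ p * y ^ q)"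
    by simp
qed


lemma degree_drop:
  fixes Q :: "real poly"
  assumes "degree Q \<le> Suc d" "coeff Q (Suc d) = 0"
  shows "degree Q \<le> d"
proof (rule ccontr)
  assume "\<not> degree Q \<le> d"
  then have "degree Q = Suc d" using assms(1) by simp
  moreover have "Q \<noteq> 0" using \<open>\<not> degree Q \<le> d\<close> by auto
  ultimately show False using assms(2) leading_coeff_neq_0[of Q] by simp
qed

lemma poly_Ubasis: "degree P \<le> d \<Longrightarrow> \<exists>\<beta>. \<forall>x. poly P x = (\<Sum>i\<le>d. \<beta> i * U i x)"
proof (induction d arbitrary: P)
  case 0
  then have "poly P x = coeff P 0 * U 0 x" for x by (simp add: poly_altdef)
  then show ?case by (intro exI[of _ "\<lambda>i. coeff P 0"]) simp
next
  case (Suc d)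
  define c where "c = coeff P (Suc d) / 2 ^ Suc d"
  define Q where "Q = P - smult c (Up (Suc d))"
  have "degree Q \<le> Suc d"
    unfolding Q_def using Suc.prems deg_Up[of "Suc d"]
    by (intro order_trans[OF degree_diff_le_max]) (auto intro: order_trans[OF degree_smult_le])
  moreover have "coeff Q (Suc d) = 0" unfolding Q_def c_def by (simp add: coeff_Up)
  ultimately have "degree Q \<le> d" by (rule degree_drop)
  then obtain \<beta> where \<beta>: "\<forall>x. poly Q x = (\<Sum>i\<le>d. \<beta> i * U i x)" using Suc.IH by blast
  have "poly P x = (\<Sum>i\<le>Suc d. (\<beta>(Suc d := c)) i * U i x)" for x
  proof -
    have "poly P x = poly Q x + c * U (Suc d) x" unfolding Q_def by (simp add: poly_Up)
    also have "\<dots> = (\<Sum>i\<le>d. (\<beta>(Suc d := c)) i * U i x) + (\<beta>(Suc d := c)) (Suc d) * U (Suc d) x"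
      using \<beta> by simp
    finally show ?thesis by simp
  qed
  then show ?case by blast
qed

lemma pow_Ubasis: "\<exists>\<beta>. \<forall>x. x ^ p = (\<Sum>i\<le>p. \<beta> i * U i x)"
proof -
  have "degree (monom (1::real) p) \<le> p" by (simp add: degree_monom_le)
  from poly_Ubasis[OF this] obtain \<beta> where "\<forall>x. poly (monom 1 p) x = (\<Sum>i\<le>p. \<beta> i * U i x)" by blast
  then show ?thesis by (intro exI[of _ \<beta>]) (simp add: poly_monom)
qed

definition inspan :: "nat \<Rightarrow> (real \<times> real \<Rightarrow> real) \<Rightarrow> bool" where
  "inspan n f \<longleftrightarrow> (\<exists>C. \<forall>x y. f (x, y) = (\<Sum>\<iota>\<in>TRI n. C \<iota> * (U (fst \<iota>) x * U (snd \<iota>) y)))"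

lemma finite_TRI: "finite (TRI n)" unfolding TRI_def by auto

lemma inspan_add: "inspan n f \<Longrightarrow> inspan n g \<Longrightarrow> inspan n (\<lambda>p. f p + g p)"
proof -
  assume "inspan n f" "inspan n g"
  then obtain C D where C: "\<forall>x y. f (x, y) = (\<Sum>\<iota>\<in>TRI n. C \<iota> * (U (fst \<iota>) x * U (snd \<iota>) y))"
    and D: "\<forall>x y. g (x, y) = (\<Sum>\<iota>\<in>TRI n. D \<iota> * (U (fst \<iota>) x * U (snd \<iota>) y))" unfolding inspan_def by blast
  show ?thesis unfolding inspan_def
    by (rule exI[of _ "\<lambda>\<iota>. C \<iota> + D \<iota>"]) (simp add: C D sum.distrib[symmetric] algebra_simps)
qed

lemma inspan_scale: "inspan n f \<Longrightarrow> inspan n (\<lambda>p. a * f p)"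
proof -
  assume "inspan n f"
  then obtain C where C: "\<forall>x y. f (x, y) = (\<Sum>\<iota>\<in>TRI n. C \<iota> * (U (fst \<iota>) x * U (snd \<iota>) y))"
    unfolding inspan_def by blast
  show ?thesis unfolding inspan_def
    by (rule exI[of _ "\<lambda>\<iota>. a * C \<iota>"]) (simp add: C sum_distrib_left algebra_simps)
qed

lemma inspan_zero: "inspan n (\<lambda>p. 0)"
  unfolding inspan_def by (rule exI[of _ "\<lambda>\<iota>. 0"]) simp

lemma inspan_sum: "finite F \<Longrightarrow> (\<And>t. t \<in> F \<Longrightarrow> inspan n (g t)) \<Longrightarrow> inspan n (\<lambda>p. \<Sum>t\<in>F. g t p)"
proof (induction F rule: finite_induct)
  case empty then show ?case using inspan_zero by simp
next
  case (insert t F)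
  have "inspan n (\<lambda>p. g t p + (\<Sum>t\<in>F. g t p))"
    using insert by (intro inspan_add) auto
  then show ?case using insert by simp
qed

lemma inspan_mono:
  assumes "p + q \<le> n"
  shows "inspan n (\<lambda>z. fst z ^ p * snd z ^ q)"
proof -
  obtain \<beta> where \<beta>: "\<forall>x. x ^ p = (\<Sum>i\<le>p. \<beta> i * U i x)" using pow_Ubasis by blast
  obtain \<gamma> where \<gamma>: "\<forall>y. y ^ q = (\<Sum>l\<le>q. \<gamma> l * U l y)" using pow_Ubasis by blast
  define R where "R = {..p} \<times> {..q}"
  have RT: "R \<subseteq> TRI n" unfolding R_def TRI_def using assms by auto
  define C where "C \<iota> = (if \<iota> \<in> R then \<beta> (fst \<iota>) * \<gamma> (snd \<iota>) else 0)" for \<iota>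
  show ?thesis unfolding inspan_def
  proof (rule exI[of _ C], intro allI)
    fix x y :: real
    have "x ^ p * y ^ q = (\<Sum>i\<le>p. \<Sum>l\<le>q. \<beta> i * U i x * (\<gamma> l * U l y))"
      using \<beta> \<gamma> by (simp add: sum_product)
    also have "\<dots> = (\<Sum>\<iota>\<in>R. \<beta> (fst \<iota>) * \<gamma> (snd \<iota>) * (U (fst \<iota>) x * U (snd \<iota>) y))"
      unfolding R_def sum.cartesian_product by (intro sum.cong refl) (auto simp: algebra_simps)
    also have "\<dots> = (\<Sum>\<iota>\<in>TRI n. C \<iota> * (U (fst \<iota>) x * U (snd \<iota>) y))"
    proof -
      have "(\<Sum>\<iota>\<in>TRI n. C \<iota> * (U (fst \<iota>) x * U (snd \<iota>) y)) = (\<Sum>\<iota>\<in>TRI n \<inter> R. \<beta> (fst \<iota>) * \<gamma> (snd \<iota>) * (U (fst \<iota>) x * U (snd \<iota>) y))"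
      proof -
        have "(\<Sum>\<iota>\<in>TRI n. C \<iota> * (U (fst \<iota>) x * U (snd \<iota>) y)) = (\<Sum>\<iota>\<in>TRI n. if \<iota> \<in> R then \<beta> (fst \<iota>) * \<gamma> (snd \<iota>) * (U (fst \<iota>) x * U (snd \<iota>) y) else 0)"
          by (intro sum.cong refl) (simp add: C_def)
        also have "\<dots> = (\<Sum>\<iota>\<in>TRI n \<inter> R. \<beta> (fst \<iota>) * \<gamma> (snd \<iota>) * (U (fst \<iota>) x * U (snd \<iota>) y))"
          by (rule sum.inter_restrict[symmetric]) (rule finite_TRI)
        finally show ?thesis .
      qed
      also have "TRI n \<inter> R = R" using RT by auto
      finally show ?thesis by simp
    qed
    finally show "fst (x, y) ^ p * snd (x, y) ^ q = (\<Sum>\<iota>\<in>TRI n. C \<iota> * (U (fst \<iota>) x * U (snd \<iota>) y))" by simp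
  qed
qed

lemma poly2_inspan:
  assumes "f \<in> poly2 n"
  shows "inspan n f"
proof -
  obtain c where c: "\<forall>x y. f (x, y) = (\<Sum>i\<le>n. \<Sum>j\<le>n - i. c i j * x ^ i * y ^ j)"
    using assms unfolding poly2_def by blast
  have "inspan n (\<lambda>z. \<Sum>i\<le>n. \<Sum>j\<le>n - i. c i j * (fst z ^ i * snd z ^ j))"
    by (intro inspan_sum inspan_scale inspan_mono) auto
  then obtain C where C: "\<forall>x y. (\<Sum>i\<le>n. \<Sum>j\<le>n - i. c i j * (x ^ i * y ^ j)) = (\<Sum>\<iota>\<in>TRI n. C \<iota> * (U (fst \<iota>) x * U (snd \<iota>) y))"
    unfolding inspan_def by auto
  show ?thesis unfolding inspan_def
    by (rule exI[of _ C]) (simp add: c C[rule_format, symmetric] mult.assoc)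
qed


lemma tri_sum2: "2 * (\<Sum>i\<le>n. n - i + 1) = (n + 1) * (n + 2::nat)"
proof (induction n)
  case 0 then show ?case by simp
next
  case (Suc n)
  have "(\<Sum>i\<le>Suc n. Suc n - i + 1) = (\<Sum>i\<le>n. Suc n - i + 1) + 1" by simp
  also have "(\<Sum>i\<le>n. Suc n - i + 1) = (\<Sum>i\<le>n. (n - i + 1) + 1)"
    by (intro sum.cong refl) (simp add: Suc_diff_le)
  also have "\<dots> = (\<Sum>i\<le>n. n - i + 1) + (\<Sum>i\<le>n. 1)" by (rule sum.distrib)
  also have "(\<Sum>i\<le>n. (1::nat)) = n + 1" by simp
  finally have "2 * (\<Sum>i\<le>Suc n. Suc n - i + 1) = 2 * (\<Sum>i\<le>n. n - i + 1) + 2 * n + 4" by simp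
  then show ?case using Suc by simp
qed

lemma card_TRI: "2 * card (TRI n) = (n + 1) * (n + 2)"
proof -
  have "card (TRI n) = (\<Sum>i\<le>n. card {..n - i})" unfolding TRI_def by (rule card_SigmaI) auto
  also have "\<dots> = (\<Sum>i\<le>n. n - i + 1)" by simp
  finally show ?thesis using tri_sum2[of n] by simp
qed

lemma card_IDX_TRI: "even n \<Longrightarrow> card (IDX n) = card (TRI n)"
proof -
  assume "even n"
  then obtain t where t: "n = 2 * t" by blast
  have "2 * card (IDX n) = (n + 1) * (n + 2)" unfolding card_IDX t by simp
  then show ?thesis using card_TRI[of n] by simp
qed

lemma finite_IDX: "finite (IDX n)" unfolding IDX_def by simp

lemma orth_dual:
  assumes "even n" "a \<in> IDX n" "b \<in> IDX n"
  shows "(\<Sum>\<iota>\<in>TRI n. SS n a \<iota> * SS n b \<iota>) = (if a = b then (real n + 2) * (real n + 3) / 8 else 0)"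
  by (rule proj_lemma[OF finite_IDX finite_TRI card_IDX_TRI[OF assms(1)] _ orth_primal[OF assms(1)] assms(2,3)])
     (auto intro!: divide_pos_pos mult_pos_pos)

definition pt :: "nat \<Rightarrow> nat \<times> nat \<Rightarrow> real \<times> real" where
  "pt n a = (cos (alpha n (fst a)), cos (beta n (jj (fst a) (snd a))))"

lemma alpha_range: "m \<in> {1..n+1} \<Longrightarrow> 0 < alpha n m \<and> alpha n m < pi"
proof -
  assume m: "m \<in> {1..n+1}"
  have "real m < real n + 2" using m by auto
  then have "real m * pi < (real n + 2) * pi" by simp
  then show ?thesis using m unfolding alpha_def by (simp add: field_simps)
qed

lemma jj_range: "even n \<Longrightarrow> k \<in> {1..n div 2 + 1} \<Longrightarrow> jj m k \<in> {1..n+2}"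
  by (auto simp: jj_def)

lemma beta_range: "j \<in> {1..n+2} \<Longrightarrow> 0 < beta n j \<and> beta n j < pi"
proof -
  assume j: "j \<in> {1..n+2}"
  have "real j < real n + 3" using j by auto
  then have "real j * pi < (real n + 3) * pi" by simp
  then show ?thesis using j unfolding beta_def by (simp add: field_simps)
qed

lemma pt_sin_pos:
  assumes "even n" "b \<in> IDX n"
  shows "sin (alpha n (fst b)) > 0" "sin (beta n (jj (fst b) (snd b))) > 0"
proof -
  show "sin (alpha n (fst b)) > 0" using alpha_range[of "fst b" n] assms(2) by (auto simp: IDX_def intro: sin_gt_zero)
  have "jj (fst b) (snd b) \<in> {1..n+2}" using jj_range[OF assms(1)] assms(2) by (auto simp: IDX_def)
  then show "sin (beta n (jj (fst b) (snd b))) > 0" using beta_range by (auto intro: sin_gt_zero)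
qed

lemma U_cos_sin: "sin t \<noteq> 0 \<Longrightarrow> U i (cos t) = sin ((real i + 1) * t) / sin t"
  using U_sin[of t i] by (simp add: field_simps)

lemma LL_delta:
  assumes "even n" "a \<in> IDX n" "b \<in> IDX n"
  shows "LL n a (pt n b) = (if a = b then 1 else 0)"
proof -
  define sa where "sa = sin (alpha n (fst b))"
  define sb where "sb = sin (beta n (jj (fst b) (snd b)))"
  have sa: "sa > 0" and sb: "sb > 0" using pt_sin_pos[OF assms(1,3)] by (auto simp: sa_def sb_def)
  have "(\<Sum>(i, l)\<in>TRI n. U i (fst (pt n b)) * U l (snd (pt n b)) * sin ((real i + 1) * alpha n (fst a)) * sin ((real l + 1) * beta n (jj (fst a) (snd a))))
      = (\<Sum>\<iota>\<in>TRI n. SS n a \<iota> * SS n b \<iota>) / (sa * sb)"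
    unfolding sum_divide_distrib
  proof (rule sum.cong[OF refl])
    fix \<iota> assume "\<iota> \<in> TRI n"
    obtain i l where il: "\<iota> = (i, l)" by fastforce
    have "U i (fst (pt n b)) = sin ((real i + 1) * alpha n (fst b)) / sa"
      unfolding pt_def sa_def using sa by (simp add: U_cos_sin sa_def)
    moreover have "U l (snd (pt n b)) = sin ((real l + 1) * beta n (jj (fst b) (snd b))) / sb"
      unfolding pt_def sb_def using sb by (simp add: U_cos_sin sb_def)
    ultimately show "(case \<iota> of (i, l) \<Rightarrow> U i (fst (pt n b)) * U l (snd (pt n b)) * sin ((real i + 1) * alpha n (fst a)) * sin ((real l + 1) * beta n (jj (fst a) (snd a))))
        = SS n a \<iota> * SS n b \<iota> / (sa * sb)"
      unfolding il SS_def by (simp add: ac_simps)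
  qed
  also have "\<dots> = (if a = b then (real n + 2) * (real n + 3) / 8 else 0) / (sa * sb)"
    by (simp only: orth_dual[OF assms])
  finally have S: "(\<Sum>(i, l)\<in>TRI n. U i (fst (pt n b)) * U l (snd (pt n b)) * sin ((real i + 1) * alpha n (fst a)) * sin ((real l + 1) * beta n (jj (fst a) (snd a))))
     = (if a = b then (real n + 2) * (real n + 3) / 8 else 0) / (sa * sb)" .
  show ?thesis
  proof (cases "a = b")
    case True
    have aux: "\<And>D s t::real. D > 0 \<Longrightarrow> s > 0 \<Longrightarrow> t > 0 \<Longrightarrow> 8 / D * s * t * (D / 8 / (s * t)) = 1"
      by (simp add: field_simps)
    have "8 / ((real n + 2) * (real n + 3)) * sa * sb * ((real n + 2) * (real n + 3) / 8 / (sa * sb)) = 1"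
      by (rule aux) (use sa sb in auto)
    then show ?thesis unfolding LL_def S using True by (simp add: sa_def sb_def)
  next
    case False
    then show ?thesis unfolding LL_def S by simp
  qed
qed

lemma LL_poly2: "LL n a \<in> poly2 n"
proof -
  define K where "K \<iota> = 8 / ((real n + 2) * (real n + 3)) * sin (alpha n (fst a)) * sin (beta n (jj (fst a) (snd a))) *
      (sin ((real (fst \<iota>) + 1) * alpha n (fst a)) * sin ((real (snd \<iota>) + 1) * beta n (jj (fst a) (snd a))))" for \<iota>
  have e: "LL n a = (\<lambda>p. \<Sum>\<iota>\<in>TRI n. K \<iota> * (U (fst \<iota>) (fst p) * U (snd \<iota>) (snd p)))"
  proof
    fix p
    show "LL n a p = (\<Sum>\<iota>\<in>TRI n. K \<iota> * (U (fst \<iota>) (fst p) * U (snd \<iota>) (snd p)))"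
      unfolding LL_def K_def sum_distrib_left
      by (intro sum.cong refl) (auto simp: algebra_simps)
  qed
  show ?thesis unfolding e
    by (intro poly2_sum finite_TRI poly2_scale poly2_UU) (auto simp: TRI_def)
qed

lemma poly2_vanish:
  assumes "even n" "f \<in> poly2 n" "\<And>b. b \<in> IDX n \<Longrightarrow> f (pt n b) = 0"
  shows "f (x, y) = 0"
proof -
  obtain C where C: "\<forall>x y. f (x, y) = (\<Sum>\<iota>\<in>TRI n. C \<iota> * (U (fst \<iota>) x * U (snd \<iota>) y))"
    using poly2_inspan[OF assms(2)] unfolding inspan_def by blast
  have key: "f (pt n b) * (sin (alpha n (fst b)) * sin (beta n (jj (fst b) (snd b)))) = (\<Sum>\<iota>\<in>TRI n. C \<iota> * SS n b \<iota>)" for b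
  proof -
    have "f (pt n b) = (\<Sum>\<iota>\<in>TRI n. C \<iota> * (U (fst \<iota>) (cos (alpha n (fst b))) * U (snd \<iota>) (cos (beta n (jj (fst b) (snd b))))))"
      unfolding pt_def using C by simp
    then have "f (pt n b) * (sin (alpha n (fst b)) * sin (beta n (jj (fst b) (snd b)))) =
      (\<Sum>\<iota>\<in>TRI n. C \<iota> * (U (fst \<iota>) (cos (alpha n (fst b))) * U (snd \<iota>) (cos (beta n (jj (fst b) (snd b))))) * (sin (alpha n (fst b)) * sin (beta n (jj (fst b) (snd b)))))"
      by (simp add: sum_distrib_right)
    also have "\<dots> = (\<Sum>\<iota>\<in>TRI n. C \<iota> * SS n b \<iota>)"
    proof (rule sum.cong[OF refl])
      fix \<iota> :: "nat \<times> nat"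
      have e1: "sin (alpha n (fst b)) * U (fst \<iota>) (cos (alpha n (fst b))) = sin ((real (fst \<iota>) + 1) * alpha n (fst b))"
        by (rule U_sin)
      have e2: "sin (beta n (jj (fst b) (snd b))) * U (snd \<iota>) (cos (beta n (jj (fst b) (snd b)))) = sin ((real (snd \<iota>) + 1) * beta n (jj (fst b) (snd b)))"
        by (rule U_sin)
      show "C \<iota> * (U (fst \<iota>) (cos (alpha n (fst b))) * U (snd \<iota>) (cos (beta n (jj (fst b) (snd b))))) * (sin (alpha n (fst b)) * sin (beta n (jj (fst b) (snd b)))) = C \<iota> * SS n b \<iota>"
        unfolding SS_def e1[symmetric] e2[symmetric] by (simp add: ac_simps)
    qed
    finally show ?thesis .
  qed
  have Cz: "C \<kappa> = 0" if k: "\<kappa> \<in> TRI n" for \<kappa>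
  proof -
    have "0 = (\<Sum>b\<in>IDX n. f (pt n b) * (sin (alpha n (fst b)) * sin (beta n (jj (fst b) (snd b)))) * SS n b \<kappa>)"
      using assms(3) by simp
    also have "\<dots> = (\<Sum>b\<in>IDX n. \<Sum>\<iota>\<in>TRI n. C \<iota> * (SS n b \<iota> * SS n b \<kappa>))"
      unfolding key by (simp add: sum_distrib_right mult.assoc)
    also have "\<dots> = (\<Sum>\<iota>\<in>TRI n. C \<iota> * (\<Sum>b\<in>IDX n. SS n b \<iota> * SS n b \<kappa>))"
      by (subst sum.swap) (simp add: sum_distrib_left)
    also have "\<dots> = (\<Sum>\<iota>\<in>TRI n. C \<iota> * (if \<iota> = \<kappa> then (real n + 2) * (real n + 3) / 8 else 0))"
      by (intro sum.cong refl) (simp add: orth_primal[OF assms(1) _ k])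
    also have "\<dots> = C \<kappa> * ((real n + 2) * (real n + 3) / 8)"
      using k finite_TRI by (simp add: if_distrib sum.delta cong: if_cong)
    finally show ?thesis by simp
  qed
  show ?thesis using C Cz by simp
qed

lemma MPy_eq: "k \<ge> 1 \<Longrightarrow> MP_y n m k = cos (beta n (jj m k))"
  by (auto simp: MP_y_def beta_def jj_def of_nat_diff)

lemma pt_eq: "k \<ge> 1 \<Longrightarrow> pt n (m, k) = (cos (real m * pi / (real n + 2)), MP_y n m k)"
  by (simp add: pt_def alpha_def MPy_eq)

lemma MP_eq: "MP_points n = pt n ` IDX n"
proof (intro set_eqI iffI)
  fix p assume "p \<in> MP_points n"
  then obtain m k where p: "p = (cos (real m * pi / (real n + 2)), MP_y n m k)" "m \<in> {1..n+1}" "k \<in> {1..n div 2 + 1}"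
    unfolding MP_points_def by blast
  then have "p = pt n (m, k)" using pt_eq[of k n m] by simp
  moreover have "(m, k) \<in> IDX n" using p unfolding IDX_def by simp
  ultimately show "p \<in> pt n ` IDX n" by blast
next
  fix p assume "p \<in> pt n ` IDX n"
  then obtain m k where p: "p = pt n (m, k)" "m \<in> {1..n+1}" "k \<in> {1..n div 2 + 1}"
    unfolding IDX_def by blast
  then have "p = (cos (real m * pi / (real n + 2)), MP_y n m k)" using pt_eq[of k n m] by simp
  then show "p \<in> MP_points n" unfolding MP_points_def using p(2,3) by blast
qed

lemma jj_inj: "jj m k = jj m k' \<Longrightarrow> k \<ge> 1 \<Longrightarrow> k' \<ge> 1 \<Longrightarrow> k = k'"
  unfolding jj_def by (cases "odd m") simp_all

lemma inj_pt: "even n \<Longrightarrow> inj_on (pt n) (IDX n)"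
proof (rule inj_onI)
  fix a b assume n: "even n" and a: "a \<in> IDX n" and b: "b \<in> IDX n" and e: "pt n a = pt n b"
  have "cos (alpha n (fst a)) = cos (alpha n (fst b))" using e by (simp add: pt_def)
  then have "alpha n (fst a) = alpha n (fst b)"
    using alpha_range[of "fst a" n] alpha_range[of "fst b" n] a b
    by (rule_tac cos_inj_pi) (auto simp: IDX_def)
  then have m: "fst a = fst b" by (simp add: alpha_def)
  have ja: "jj (fst a) (snd a) \<in> {1..n+2}" and jb: "jj (fst b) (snd b) \<in> {1..n+2}"
    using jj_range[OF n] a b by (auto simp: IDX_def)
  have "cos (beta n (jj (fst a) (snd a))) = cos (beta n (jj (fst b) (snd b)))" using e by (simp add: pt_def)
  then have "beta n (jj (fst a) (snd a)) = beta n (jj (fst b) (snd b))"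
    using beta_range[OF ja] beta_range[OF jb] by (rule_tac cos_inj_pi) auto
  then have "jj (fst a) (snd a) = jj (fst b) (snd b)" by (simp add: beta_def)
  moreover have "snd a \<ge> 1" "snd b \<ge> 1" using a b by (auto simp: IDX_def)
  ultimately have "snd a = snd b" using m jj_inj by metis
  then show "a = b" using m by (simp add: prod_eq_iff)
qed

lemma lagrange_eq:
  assumes "even n" "a \<in> IDX n"
  shows "lagrange2 n (MP_points n) (pt n a) = LL n a"
  unfolding lagrange2_def
proof (rule the_equality)
  have "\<forall>b\<in>MP_points n. LL n a b = (if b = pt n a then 1 else 0)"
  proof
    fix b assume "b \<in> MP_points n"
    then obtain b' where b': "b' \<in> IDX n" "b = pt n b'" unfolding MP_eq by blast
    have "(pt n b' = pt n a) = (b' = a)" using inj_pt[OF assms(1)] b'(1) assms(2) by (auto dest: inj_onD)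
    then show "LL n a b = (if b = pt n a then 1 else 0)" using LL_delta[OF assms(1,2) b'(1)] b'(2) by auto
  qed
  then show "LL n a \<in> poly2 n \<and> (\<forall>b\<in>MP_points n. LL n a b = (if b = pt n a then 1 else 0))"
    using LL_poly2 by blast
next
  fix g assume g: "g \<in> poly2 n \<and> (\<forall>b\<in>MP_points n. g b = (if b = pt n a then 1 else 0))"
  have "(\<lambda>p. g p - LL n a p) \<in> poly2 n" using g LL_poly2 by (intro poly2_diff) auto
  moreover have "g (pt n b) - LL n a (pt n b) = 0" if "b \<in> IDX n" for b
  proof -
    have "pt n b \<in> MP_points n" using that unfolding MP_eq by blast
    then have "g (pt n b) = (if pt n b = pt n a then 1 else 0)" using g by blast
    moreover have "(pt n b = pt n a) = (b = a)" using inj_pt[OF assms(1)] that assms(2) by (auto dest: inj_onD)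
    ultimately show ?thesis using LL_delta[OF assms(1,2) that] by auto
  qed
  ultimately have "g (x, y) - LL n a (x, y) = 0" for x y
    using poly2_vanish[OF assms(1), of "\<lambda>p. g p - LL n a p"] by blast
  then show "g = LL n a" by (auto simp: fun_eq_iff)
qed

theorem theorem12:
  shows "\<exists>C>0. \<forall>n::nat. n > 0 \<and> even n \<longrightarrow> lebesgue_MP n \<le> C * (real n)^2"
proof (intro exI[of _ 100000] conjI allI impI)
  fix n :: nat assume n: "n > 0 \<and> even n"
  then have n2: "n \<ge> 2" by (metis dvd_imp_le le_antisym not_less_eq_eq numeral_2_eq_2 zero_less_iff_neq_zero)
  have ev: "even n" using n by simp
  show "lebesgue_MP n \<le> 100000 * (real n)^2"
    unfolding lebesgue_MP_def lebesgue_const_def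
  proof (rule cSUP_least)
    show "{-1..1} \<times> {-1..1} \<noteq> ({} :: (real \<times> real) set)" by auto
  next
    fix p :: "real \<times> real" assume p: "p \<in> {-1..1} \<times> {-1..1}"
    obtain x y where xy: "p = (x, y)" by fastforce
    have xb: "\<bar>x\<bar> \<le> 1" and yb: "\<bar>y\<bar> \<le> 1" using p xy by auto
    have "(\<Sum>a\<in>MP_points n. \<bar>lagrange2 n (MP_points n) a p\<bar>) = (\<Sum>b\<in>IDX n. \<bar>lagrange2 n (MP_points n) (pt n b) p\<bar>)"
      unfolding MP_eq by (rule sum.reindex[OF inj_pt[OF ev], unfolded comp_def])
    also have "\<dots> = (\<Sum>b\<in>IDX n. \<bar>LL n b (x, y)\<bar>)"
      by (intro sum.cong refl) (simp add: lagrange_eq[OF ev] xy)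
    also have "\<dots> \<le> 100000 * (real n)^2" by (rule lebesgue_sum_bound[OF n2 xb yb])
    finally show "(\<Sum>a\<in>MP_points n. \<bar>lagrange2 n (MP_points n) a p\<bar>) \<le> 100000 * (real n)^2" .
  qed
qed simp


end
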